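(* Let $A$ satisfy the spectral assumption, let $P_1=Q_1\in\mathbb{R}^{n\times k}$ have orthonormal columns spanning $E_{\mathrm u}$, and suppose $E_{\mathrm u}^\perp$ and $E_{\mathrm s}$ are $\xi$-close for some $\xi\in(0,1)$. Then one can choose $P_2\in\mathbb{R}^{n\times(n-k)}$ with orthonormal columns spanning $E_{\mathrm u}^\perp$ and $Q_2\in\mathbb{R}^{n\times(n-k)}$ with orthonormal columns spanning $E_{\mathrm s}$ such that, with the notation below, (1) $\sigma_{\min}(P_2^\top Q_2)\ge 1-\xi$, $\|P_1^\top Q_2\|\le\sqrt{2\xi}$, $\|P_2-Q_2\|\le\sqrt{2\xi}$; (2) $\|R_2\|\le\frac{1}{1-\xi}$ and $\|N_2\|\le\frac{1}{1-\xi}\|A\|$; (3) $\|P_1^\top-R_1\|\le\frac{\sqrt{2\xi}}{1-\xi}$ and $\|R_1\|\le 1+\frac{\sqrt{2\xi}}{1-\xi}$; (4) $\|\Delta\|\le\frac{2-\xi}{1-\xi}\sqrt{2\xi}\,\|A\|$.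
   Context: Spectral assumption: $A\in\mathbb{R}^{n\times n}$ is diagonalizable with eigenvalues $|\lambda_1|>|\lambda_2|\ge\cdots\ge|\lambda_k|>1>|\lambda_{k+1}|\ge\cdots\ge|\lambda_n|$. $E_{\mathrm u}$ (resp. $E_{\mathrm s}$) is the real $A$-invariant subspace spanned by the real eigenvectors and the real and imaginary parts of complex eigenvectors associated with $\lambda_1,\dots,\lambda_k$ (resp. $\lambda_{k+1},\dots,\lambda_n$); $\mathbb{R}^n=E_{\mathrm u}\oplus E_{\mathrm s}$. Given orthonormal-column matrices $P_1$ (basis of $E_{\mathrm u}$), $P_2$ (basis of $E_{\mathrm u}^\perp$), $P=[P_1\ P_2]$, define $M=P^\top AP=\begin{bmatrix}M_1&\Delta\\0&M_2\end{bmatrix}$. With $Q_1=P_1$, $Q_2$ an orthonormal basis of $E_{\mathrm s}$, $Q=[Q_1\ Q_2]$, write $Q^{-1}=\begin{bmatrix}R_1\\R_2\end{bmatrix}$ ($R_1\in\mathbb{R}^{k\times n}$), so that $Q^{-1}AQ=\mathrm{diag}(N_1,N_2)$ with $N_1=M_1$. Definition ($\xi$-close): for $\xi\in(0,1]$, $E_{\mathrm u}^\perp=\mathrm{col}(P_2)$ and $E_{\mathrm s}=\mathrm{col}(Q_2)$ are $\xi$-close iff $\sigma_{\min}(P_2^\top Q_2)>1-\xi$ (independent of the choice of orthonormal bases). $\|\cdot\|$ is the spectral norm. *)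

theory Defs
  imports Complex_Main "Jordan_Normal_Form.Matrix" "Jordan_Normal_Form.Char_Poly"
begin

definition vnorm :: "real vec \<Rightarrow> real" where
  "vnorm v = sqrt (v \<bullet> v)"

definition op_norm :: "real mat \<Rightarrow> real" where
  "op_norm M = Sup {vnorm (M *\<^sub>v v) | v. v \<in> carrier_vec (dim_col M) \<and> vnorm v \<le> 1}"

definition sigma_min :: "real mat \<Rightarrow> real" where
  "sigma_min M = Inf {vnorm (M *\<^sub>v v) | v. v \<in> carrier_vec (dim_col M) \<and> vnorm v = 1}"

definition real_span :: "nat \<Rightarrow> real vec set \<Rightarrow> real vec set" where
  "real_span n G = {x. \<exists>cs :: (real \<times> real vec) list. set (map snd cs) \<subseteq> G \<and>
      x = foldr (\<lambda>(c, v) acc. c \<cdot>\<^sub>v v + acc) cs (0\<^sub>v n)}"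

definition eig_real_space :: "(complex \<Rightarrow> bool) \<Rightarrow> real mat \<Rightarrow> real vec set" where
  "eig_real_space P A = real_span (dim_row A)
     ({map_vec Re v | v l. eigenvector (map_mat complex_of_real A) v l \<and> P l} \<union>
      {map_vec Im v | v l. eigenvector (map_mat complex_of_real A) v l \<and> P l})"

definition unstable_space :: "real mat \<Rightarrow> real vec set" where
  "unstable_space A = eig_real_space (\<lambda>l. cmod l > 1) A"

definition stable_space :: "real mat \<Rightarrow> real vec set" where
  "stable_space A = eig_real_space (\<lambda>l. cmod l < 1) A"

definition orth_compl :: "nat \<Rightarrow> real vec set \<Rightarrow> real vec set" where
  "orth_compl n U = {x \<in> carrier_vec n. \<forall>y\<in>U. x \<bullet> y = 0}"

definition onb_cols :: "nat \<Rightarrow> nat \<Rightarrow> real mat \<Rightarrow> real vec set \<Rightarrow> bool" where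
  "onb_cols n d P U \<longleftrightarrow> P \<in> carrier_mat n d \<and> transpose_mat P * P = 1\<^sub>m d \<and>
      {P *\<^sub>v v | v. v \<in> carrier_vec d} = U"

text \<open>xi-closeness of two subspaces of R^n (via some choice of orthonormal bases; the
  value is independent of the choice).\<close>
definition xi_close :: "nat \<Rightarrow> real vec set \<Rightarrow> real vec set \<Rightarrow> real \<Rightarrow> bool" where
  "xi_close n U V \<xi> \<longleftrightarrow> (\<exists>d P Q. onb_cols n d P U \<and> onb_cols n d Q V \<and>
      sigma_min (transpose_mat P * Q) > 1 - \<xi>)"

definition hcat :: "'a mat \<Rightarrow> 'a mat \<Rightarrow> 'a mat" where
  "hcat P1 P2 = mat (dim_row P1) (dim_col P1 + dim_col P2)
     (\<lambda>(i, j). if j < dim_col P1 then P1 $$ (i, j) else P2 $$ (i, j - dim_col P1))"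

end

theory Submission
  imports Defs
begin

lemma sprod_self_sum': "(x::real vec) \<bullet> x = (\<Sum>i<dim_vec x. (x$i)^2)"
  unfolding scalar_prod_def by (auto simp: power2_eq_square intro!: sum.cong)

lemma sprod_self_nonneg': "0 \<le> (x::real vec) \<bullet> x"
  unfolding sprod_self_sum' by (auto intro: sum_nonneg)

lemma vnorm_nonneg: "0 \<le> vnorm v"
  unfolding vnorm_def using sprod_self_nonneg'[of v] by simp

lemma vnorm_sq: "(vnorm v)^2 = v \<bullet> v"
  unfolding vnorm_def using sprod_self_nonneg'[of v] by simp

lemma vnorm_zero: "vnorm (0\<^sub>v n) = 0"
  unfolding vnorm_def by simp

lemma vnorm_smult_any: "vnorm (c \<cdot>\<^sub>v v) = \<bar>c\<bar> * vnorm v"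
proof -
  have "(c \<cdot>\<^sub>v v) \<bullet> (c \<cdot>\<^sub>v v) = (\<Sum>i<dim_vec v. c^2 * (v$i)^2)"
    unfolding sprod_self_sum' by (simp add: power_mult_distrib)
  also have "\<dots> = c^2 * (v \<bullet> v)" unfolding sprod_self_sum' by (simp add: sum_distrib_left)
  finally have "sqrt ((c \<cdot>\<^sub>v v) \<bullet> (c \<cdot>\<^sub>v v)) = sqrt (c^2) * sqrt (v \<bullet> v)"
    by (simp only: real_sqrt_mult)
  thus ?thesis unfolding vnorm_def by (simp only: real_sqrt_abs)
qed

lemma vnorm_smult: "v \<in> carrier_vec n \<Longrightarrow> vnorm (c \<cdot>\<^sub>v v) = \<bar>c\<bar> * vnorm v"
  by (rule vnorm_smult_any)

lemma vnorm_eq0: assumes "v \<in> carrier_vec n" "vnorm v = 0" shows "v = 0\<^sub>v n"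
proof (rule eq_vecI)
  fix i assume i: "i < dim_vec (0\<^sub>v n :: real vec)"
  have "v \<bullet> v = 0" using assms vnorm_sq[of v] by simp
  hence "(\<Sum>i<dim_vec v. (v$i)^2) = 0" unfolding sprod_self_sum' by simp
  hence "\<forall>j\<in>{..<dim_vec v}. (v$j)^2 = 0" by (subst sum_nonneg_eq_0_iff[symmetric], auto)
  thus "v $ i = 0\<^sub>v n $ i" using i assms by auto
qed (insert assms, auto)

lemma cauchy_schwarz_sq: assumes v: "(v::real vec) \<in> carrier_vec n" and w: "w \<in> carrier_vec n"
  shows "(v \<bullet> w)^2 \<le> (v \<bullet> v) * (w \<bullet> w)"
proof (cases "w \<bullet> w = 0")
  case True
  hence "vnorm w = 0" unfolding vnorm_def by simp
  hence "w = 0\<^sub>v n" using vnorm_eq0[OF w] by simp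
  thus ?thesis using v by simp
next
  case False
  hence pos: "w \<bullet> w > 0" using sprod_self_nonneg'[of w] by simp
  define t where "t = (v \<bullet> w) / (w \<bullet> w)"
  have "0 \<le> (v - t \<cdot>\<^sub>v w) \<bullet> (v - t \<cdot>\<^sub>v w)" by (rule sprod_self_nonneg')
  also have "\<dots> = v \<bullet> v - 2 * t * (v \<bullet> w) + t^2 * (w \<bullet> w)"
    using v w by (simp add: minus_scalar_prod_distrib[of _ n] scalar_prod_minus_distrib[of _ n]
        comm_scalar_prod[of w n v] power2_eq_square algebra_simps)
  also have "\<dots> = v \<bullet> v - (v \<bullet> w)^2 / (w \<bullet> w)" unfolding t_def using pos
    by (simp add: field_simps power2_eq_square)
  finally show ?thesis using pos by (simp add: field_simps)
qed

lemma cauchy_schwarz: assumes "(v::real vec) \<in> carrier_vec n" "w \<in> carrier_vec n"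
  shows "\<bar>v \<bullet> w\<bar> \<le> vnorm v * vnorm w"
proof -
  have "sqrt ((v \<bullet> w)^2) \<le> sqrt ((v \<bullet> v) * (w \<bullet> w))"
    by (rule real_sqrt_le_mono[OF cauchy_schwarz_sq[OF assms]])
  hence "\<bar>v \<bullet> w\<bar> \<le> sqrt ((v \<bullet> v) * (w \<bullet> w))" by (simp only: real_sqrt_abs)
  thus ?thesis unfolding vnorm_def by (simp add: real_sqrt_mult)
qed

lemma vnorm_add: assumes v: "(v::real vec) \<in> carrier_vec n" and w: "w \<in> carrier_vec n"
  shows "vnorm (v + w) \<le> vnorm v + vnorm w"
proof -
  have "(vnorm (v + w))^2 = v \<bullet> v + 2 * (v \<bullet> w) + w \<bullet> w"
    unfolding vnorm_sq using v w
    by (simp add: add_scalar_prod_distrib[of _ n] scalar_prod_add_distrib[of _ n] comm_scalar_prod[of w n v])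
  also have "\<dots> \<le> (vnorm v)^2 + 2 * (vnorm v * vnorm w) + (vnorm w)^2"
    unfolding vnorm_sq using cauchy_schwarz[OF v w] by simp
  also have "\<dots> = (vnorm v + vnorm w)^2" by (simp add: power2_eq_square algebra_simps)
  finally have "(vnorm (v + w))^2 \<le> (vnorm v + vnorm w)^2" .
  thus ?thesis by (rule power2_le_imp_le, insert vnorm_nonneg[of v] vnorm_nonneg[of w], simp)
qed

lemma vnorm_minus: assumes v: "(v::real vec) \<in> carrier_vec n" and w: "w \<in> carrier_vec n"
  shows "vnorm (v - w) \<le> vnorm v + vnorm w"
proof -
  have "v - w = v + (-1) \<cdot>\<^sub>v w" using v w by (intro eq_vecI, auto)
  thus ?thesis using vnorm_add[OF v, of "(-1) \<cdot>\<^sub>v w"] vnorm_smult[OF w, of "-1"] w by auto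
qed

definition bnd :: "real mat \<Rightarrow> real \<Rightarrow> bool" where
  "bnd M c \<longleftrightarrow> (\<forall>v \<in> carrier_vec (dim_col M). vnorm (M *\<^sub>v v) \<le> c * vnorm v)"

lemma bndI: assumes "M \<in> carrier_mat a b" "\<And>v. v \<in> carrier_vec b \<Longrightarrow> vnorm (M *\<^sub>v v) \<le> c * vnorm v"
  shows "bnd M c" using assms unfolding bnd_def by auto

lemma bndD: assumes "bnd M c" "M \<in> carrier_mat a b" "v \<in> carrier_vec b"
  shows "vnorm (M *\<^sub>v v) \<le> c * vnorm v" using assms unfolding bnd_def by auto

lemma op_norm_le: assumes "bnd M c" "0 \<le> c" shows "op_norm M \<le> c"
  unfolding op_norm_def
proof (rule cSup_least)
  show "{vnorm (M *\<^sub>v v) |v. v \<in> carrier_vec (dim_col M) \<and> vnorm v \<le> 1} \<noteq> {}"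
  proof -
    have "vnorm (M *\<^sub>v 0\<^sub>v (dim_col M)) \<in> {vnorm (M *\<^sub>v v) |v. v \<in> carrier_vec (dim_col M) \<and> vnorm v \<le> 1}"
      by (auto simp: vnorm_zero intro!: exI[of _ "0\<^sub>v (dim_col M)"])
    thus ?thesis by (subst ex_in_conv[symmetric], rule exI)
  qed
  fix x assume "x \<in> {vnorm (M *\<^sub>v v) |v. v \<in> carrier_vec (dim_col M) \<and> vnorm v \<le> 1}"
  then obtain v where v: "v \<in> carrier_vec (dim_col M)" "vnorm v \<le> 1" and x: "x = vnorm (M *\<^sub>v v)" by auto
  have "x \<le> c * vnorm v" using assms(1) v x unfolding bnd_def by auto
  also have "\<dots> \<le> c" using v assms(2) by (simp add: mult_left_le)
  finally show "x \<le> c" .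
qed

lemma mat_vec_bound: assumes v: "v \<in> carrier_vec (dim_col M)" "vnorm v \<le> 1"
  shows "vnorm (M *\<^sub>v v) \<le> sqrt (\<Sum>i<dim_row M. row M i \<bullet> row M i)"
proof -
  have "(M *\<^sub>v v) \<bullet> (M *\<^sub>v v) = (\<Sum>i<dim_row M. (row M i \<bullet> v)^2)"
    unfolding sprod_self_sum' by simp
  also have "\<dots> \<le> (\<Sum>i<dim_row M. row M i \<bullet> row M i)"
  proof (rule sum_mono)
    fix i assume "i \<in> {..<dim_row M}"
    hence r: "row M i \<in> carrier_vec (dim_col M)" by auto
    have "(row M i \<bullet> v)^2 \<le> (row M i \<bullet> row M i) * (v \<bullet> v)" by (rule cauchy_schwarz_sq[OF r v(1)])
    also have "\<dots> \<le> row M i \<bullet> row M i"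
    proof -
      have "(vnorm v)^2 \<le> 1" using v(2) vnorm_nonneg[of v] by (simp add: power_le_one)
      hence "v \<bullet> v \<le> 1" unfolding vnorm_sq .
      thus ?thesis using sprod_self_nonneg'[of "row M i"] v by (simp add: mult_left_le)
    qed
    finally show "(row M i \<bullet> v)^2 \<le> row M i \<bullet> row M i" .
  qed
  finally show ?thesis unfolding vnorm_def by simp
qed

lemma op_norm_upper: assumes "v \<in> carrier_vec (dim_col M)" "vnorm v \<le> 1"
  shows "vnorm (M *\<^sub>v v) \<le> op_norm M"
  unfolding op_norm_def
proof (rule cSup_upper)
  show "vnorm (M *\<^sub>v v) \<in> {vnorm (M *\<^sub>v v) |v. v \<in> carrier_vec (dim_col M) \<and> vnorm v \<le> 1}"
    using assms by auto
  show "bdd_above {vnorm (M *\<^sub>v v) |v. v \<in> carrier_vec (dim_col M) \<and> vnorm v \<le> 1}"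
    using mat_vec_bound[of _ M] unfolding bdd_above_def by (intro exI[of _ "sqrt (\<Sum>i<dim_row M. row M i \<bullet> row M i)"], auto)
qed

lemma op_norm_nonneg: "0 \<le> op_norm M"
  using op_norm_upper[of "0\<^sub>v (dim_col M)" M] vnorm_nonneg[of "M *\<^sub>v 0\<^sub>v (dim_col M)"]
  by (auto simp: vnorm_zero)

lemma bnd_op_norm: "bnd M (op_norm M)"
  unfolding bnd_def
proof
  fix v :: "real vec" assume v: "v \<in> carrier_vec (dim_col M)"
  show "vnorm (M *\<^sub>v v) \<le> op_norm M * vnorm v"
  proof (cases "vnorm v = 0")
    case True
    hence "v = 0\<^sub>v (dim_col M)" using vnorm_eq0[OF v] by simp
    moreover have "M *\<^sub>v 0\<^sub>v (dim_col M) = 0\<^sub>v (dim_row M)" by (intro eq_vecI, auto)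
    ultimately show ?thesis using op_norm_nonneg[of M] by (simp add: vnorm_zero True)
  next
    case False
    hence pos: "vnorm v > 0" using vnorm_nonneg[of v] by simp
    define v' where "v' = (1 / vnorm v) \<cdot>\<^sub>v v"
    have v'c: "v' \<in> carrier_vec (dim_col M)" unfolding v'_def using v by simp
    have "vnorm v' = 1" unfolding v'_def using vnorm_smult[OF v] pos by simp
    hence "vnorm (M *\<^sub>v v') \<le> op_norm M" using op_norm_upper[OF v'c] by simp
    moreover have "M *\<^sub>v v' = (1 / vnorm v) \<cdot>\<^sub>v (M *\<^sub>v v)" unfolding v'_def using v
      by (simp add: mult_mat_vec[of _ "dim_row M" "dim_col M"])
    moreover have "vnorm ((1 / vnorm v) \<cdot>\<^sub>v (M *\<^sub>v v)) = vnorm (M *\<^sub>v v) / vnorm v"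
      unfolding vnorm_smult_any using pos by simp
    ultimately show ?thesis using pos by (simp add: field_simps)
  qed
qed

lemma bnd_mono: assumes "bnd M c" "c \<le> d" shows "bnd M d"
  unfolding bnd_def
proof
  fix v :: "real vec" assume "v \<in> carrier_vec (dim_col M)"
  hence "vnorm (M *\<^sub>v v) \<le> c * vnorm v" using assms(1) unfolding bnd_def by auto
  also have "\<dots> \<le> d * vnorm v" using assms(2) vnorm_nonneg[of v] by (rule mult_right_mono)
  finally show "vnorm (M *\<^sub>v v) \<le> d * vnorm v" .
qed

lemma bnd_mult: assumes M: "M \<in> carrier_mat a b" and N: "N \<in> carrier_mat b c"
  and bM: "bnd M x" and bN: "bnd N y" and x: "0 \<le> x"
  shows "bnd (M * N) (x * y)"
proof (rule bndI[of _ a c])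
  show "M * N \<in> carrier_mat a c" using M N by auto
  fix v :: "real vec" assume v: "v \<in> carrier_vec c"
  have "vnorm ((M * N) *\<^sub>v v) = vnorm (M *\<^sub>v (N *\<^sub>v v))" using M N v by simp
  also have "\<dots> \<le> x * vnorm (N *\<^sub>v v)" using bndD[OF bM M] N v by simp
  also have "\<dots> \<le> x * (y * vnorm v)" using bndD[OF bN N v] x by (simp add: mult_left_mono)
  finally show "vnorm ((M * N) *\<^sub>v v) \<le> x * y * vnorm v" by simp
qed

lemma bnd_add: assumes M: "M \<in> carrier_mat a b" and N: "N \<in> carrier_mat a b"
  and bM: "bnd M x" and bN: "bnd N y"
  shows "bnd (M + N) (x + y)"
proof (rule bndI[of _ a b])
  show "M + N \<in> carrier_mat a b" using M N by auto
  fix v :: "real vec" assume v: "v \<in> carrier_vec b"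
  have "(M + N) *\<^sub>v v = M *\<^sub>v v + N *\<^sub>v v" using M N v by (simp add: add_mult_distrib_mat_vec)
  hence "vnorm ((M + N) *\<^sub>v v) \<le> vnorm (M *\<^sub>v v) + vnorm (N *\<^sub>v v)"
    using vnorm_add[of "M *\<^sub>v v" a "N *\<^sub>v v"] M N v by simp
  also have "\<dots> \<le> x * vnorm v + y * vnorm v" using bndD[OF bM M v] bndD[OF bN N v] by simp
  finally show "vnorm ((M + N) *\<^sub>v v) \<le> (x + y) * vnorm v" by (simp add: algebra_simps)
qed

lemma bnd_minus: assumes M: "M \<in> carrier_mat a b" and N: "N \<in> carrier_mat a b"
  and bM: "bnd M x" and bN: "bnd N y"
  shows "bnd (M - N) (x + y)"
proof (rule bndI[of _ a b])
  show "M - N \<in> carrier_mat a b" using M N by auto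
  fix v :: "real vec" assume v: "v \<in> carrier_vec b"
  have "(M - N) *\<^sub>v v = M *\<^sub>v v - N *\<^sub>v v" using M N v by (simp add: minus_mult_distrib_mat_vec)
  hence "vnorm ((M - N) *\<^sub>v v) \<le> vnorm (M *\<^sub>v v) + vnorm (N *\<^sub>v v)"
    using vnorm_minus[of "M *\<^sub>v v" a "N *\<^sub>v v"] M N v by simp
  also have "\<dots> \<le> x * vnorm v + y * vnorm v" using bndD[OF bM M v] bndD[OF bN N v] by simp
  finally show "vnorm ((M - N) *\<^sub>v v) \<le> (x + y) * vnorm v" by (simp add: algebra_simps)
qed

lemma sigma_min_lower: assumes v: "v \<in> carrier_vec (dim_col M)"
  shows "sigma_min M * vnorm v \<le> vnorm (M *\<^sub>v v)"
proof (cases "vnorm v = 0")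
  case True thus ?thesis using vnorm_nonneg[of "M *\<^sub>v v"] by simp
next
  case False
  hence pos: "vnorm v > 0" using vnorm_nonneg[of v] by simp
  define v' where "v' = (1 / vnorm v) \<cdot>\<^sub>v v"
  have v'c: "v' \<in> carrier_vec (dim_col M)" unfolding v'_def using v by simp
  have n1: "vnorm v' = 1" unfolding v'_def using vnorm_smult[OF v] pos by simp
  have "sigma_min M \<le> vnorm (M *\<^sub>v v')" unfolding sigma_min_def
    by (rule cInf_lower, insert v'c n1, auto intro!: bdd_belowI[of _ 0] simp: vnorm_nonneg)
  moreover have "M *\<^sub>v v' = (1 / vnorm v) \<cdot>\<^sub>v (M *\<^sub>v v)" unfolding v'_def using v
    by (simp add: mult_mat_vec[of _ "dim_row M" "dim_col M"])
  moreover have "vnorm ((1 / vnorm v) \<cdot>\<^sub>v (M *\<^sub>v v)) = vnorm (M *\<^sub>v v) / vnorm v"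
    unfolding vnorm_smult_any using pos by simp
  ultimately show ?thesis using pos by (simp add: field_simps)
qed

lemma sigma_min_ge: assumes "0 < dim_col M"
  and "\<And>v. v \<in> carrier_vec (dim_col M) \<Longrightarrow> vnorm v = 1 \<Longrightarrow> c \<le> vnorm (M *\<^sub>v v)"
  shows "c \<le> sigma_min M"
  unfolding sigma_min_def
proof (rule cInf_greatest)
  have "vnorm (unit_vec (dim_col M) 0 :: real vec) = 1"
    unfolding vnorm_def using assms(1) by simp
  hence "vnorm (M *\<^sub>v unit_vec (dim_col M) 0) \<in> {vnorm (M *\<^sub>v v) |v. v \<in> carrier_vec (dim_col M) \<and> vnorm v = 1}"
    by (auto intro!: exI[of _ "unit_vec (dim_col M) 0"])
  thus "{vnorm (M *\<^sub>v v) |v. v \<in> carrier_vec (dim_col M) \<and> vnorm v = 1} \<noteq> {}"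
    by (subst ex_in_conv[symmetric], rule exI)
qed (insert assms(2), auto)

lemma isometry: assumes Q: "Q \<in> carrier_mat a b" and QQ: "transpose_mat Q * Q = 1\<^sub>m b"
  and v: "v \<in> carrier_vec b"
  shows "(Q *\<^sub>v v) \<bullet> (Q *\<^sub>v v) = v \<bullet> v" "vnorm (Q *\<^sub>v v) = vnorm v"
proof -
  have "(transpose_mat Q *\<^sub>v (Q *\<^sub>v v)) \<bullet> v = (Q *\<^sub>v v) \<bullet> (Q *\<^sub>v v)"
    by (rule transpose_vec_mult_scalar[OF Q v], insert Q v, auto)
  moreover have "transpose_mat Q *\<^sub>v (Q *\<^sub>v v) = v"
    using Q v QQ by (simp add: assoc_mult_mat_vec[symmetric, of _ b a _ b])
  ultimately show "(Q *\<^sub>v v) \<bullet> (Q *\<^sub>v v) = v \<bullet> v" by simp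
  thus "vnorm (Q *\<^sub>v v) = vnorm v" unfolding vnorm_def by simp
qed

lemma bnd_isometry: assumes Q: "Q \<in> carrier_mat a b" and QQ: "transpose_mat Q * Q = 1\<^sub>m b"
  shows "bnd Q 1"
  by (rule bndI[OF Q], insert isometry[OF Q QQ], simp)

lemma sprod_self_sum: "(x::real vec) \<bullet> x = (\<Sum>i<dim_vec x. (x$i)^2)"
  unfolding scalar_prod_def by (auto simp: power2_eq_square intro!: sum.cong)

lemma sprod_self_nonneg: "0 \<le> (x::real vec) \<bullet> x"
  unfolding sprod_self_sum by (auto intro: sum_nonneg)

lemma sprod_self_pos: assumes "i < dim_vec (x::real vec)" "x $ i \<noteq> 0" shows "0 < x \<bullet> x"
proof -
  have "(x$i)^2 \<le> (\<Sum>i<dim_vec x. (x$i)^2)"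
    by (rule member_le_sum, insert assms, auto)
  moreover have "0 < (x$i)^2" using assms by auto
  ultimately show ?thesis unfolding sprod_self_sum by linarith
qed

lemma sprod_self_zero: assumes "(x::real vec) \<bullet> x = 0" "i < dim_vec x" shows "x $ i = 0"
  using sprod_self_pos[of i x] assms by auto

lemma real_sym_eigvec:
  fixes G :: "real mat"
  assumes G: "G \<in> carrier_mat m m" and sym: "transpose_mat G = G" and m: "0 < m"
  shows "\<exists>u lam. u \<in> carrier_vec m \<and> u \<bullet> u = 1 \<and> G *\<^sub>v u = lam \<cdot>\<^sub>v u"
proof -
  define Gc where "Gc = map_mat complex_of_real G"
  have Gc: "Gc \<in> carrier_mat m m" using G unfolding Gc_def by auto
  obtain as where cp: "char_poly Gc = (\<Prod> a \<leftarrow> as. [:- a, 1:])" and len: "length as = m"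
    using char_poly_factorized[OF Gc] by blast
  obtain e rest where as: "as = e # rest" using len m by (cases as, auto)
  have "poly (char_poly Gc) e = 0" unfolding cp as by simp
  hence "eigenvalue Gc e" using eigenvalue_root_char_poly[OF Gc] by auto
  then obtain v where ev: "eigenvector Gc v e" unfolding eigenvalue_def by auto
  have v: "v \<in> carrier_vec m" "v \<noteq> 0\<^sub>v m" and eq: "Gc *\<^sub>v v = e \<cdot>\<^sub>v v"
    using ev Gc unfolding eigenvector_def by auto
  define x where "x = vec m (\<lambda>i. Re (v $ i))"
  define y where "y = vec m (\<lambda>i. Im (v $ i))"
  have xc: "x \<in> carrier_vec m" and yc: "y \<in> carrier_vec m" unfolding x_def y_def by auto
  have comp: "(\<Sum>j<m. complex_of_real (G $$ (i,j)) * v $ j) = e * v $ i" if i: "i < m" for i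
  proof -
    have "(Gc *\<^sub>v v) $ i = (e \<cdot>\<^sub>v v) $ i" using eq by simp
    thus ?thesis using i G Gc v unfolding Gc_def
      by (auto simp: lessThan_atLeast0 scalar_prod_def)
  qed
  have Gx: "G *\<^sub>v x = Re e \<cdot>\<^sub>v x - Im e \<cdot>\<^sub>v y"
  proof (rule eq_vecI)
    fix i assume "i < dim_vec (Re e \<cdot>\<^sub>v x - Im e \<cdot>\<^sub>v y)"
    hence i: "i < m" using xc yc by auto
    have "Re (\<Sum>j<m. complex_of_real (G $$ (i,j)) * v $ j) = Re (e * v $ i)" using comp[OF i] by simp
    hence "(\<Sum>j<m. G $$ (i,j) * Re (v $ j)) = Re e * Re (v$i) - Im e * Im (v $ i)"
      by (simp add: Re_sum)
    thus "(G *\<^sub>v x) $ i = (Re e \<cdot>\<^sub>v x - Im e \<cdot>\<^sub>v y) $ i"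
      using i G unfolding x_def y_def by (auto simp: lessThan_atLeast0 scalar_prod_def)
  qed (insert G xc yc, auto)
  have Gy: "G *\<^sub>v y = Im e \<cdot>\<^sub>v x + Re e \<cdot>\<^sub>v y"
  proof (rule eq_vecI)
    fix i assume "i < dim_vec (Im e \<cdot>\<^sub>v x + Re e \<cdot>\<^sub>v y)"
    hence i: "i < m" using xc yc by auto
    have "Im (\<Sum>j<m. complex_of_real (G $$ (i,j)) * v $ j) = Im (e * v $ i)" using comp[OF i] by simp
    hence "(\<Sum>j<m. G $$ (i,j) * Im (v $ j)) = Re e * Im (v$i) + Im e * Re (v $ i)"
      by (simp add: Im_sum)
    thus "(G *\<^sub>v y) $ i = (Im e \<cdot>\<^sub>v x + Re e \<cdot>\<^sub>v y) $ i"
      using i G unfolding x_def y_def by (auto simp: lessThan_atLeast0 algebra_simps scalar_prod_def)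
  qed (insert G xc yc, auto)
  have symm: "x \<bullet> (G *\<^sub>v y) = y \<bullet> (G *\<^sub>v x)"
  proof -
    have "x \<bullet> (G *\<^sub>v y) = (transpose_mat G *\<^sub>v x) \<bullet> y"
      using transpose_vec_mult_scalar[OF G yc xc] by simp
    also have "\<dots> = y \<bullet> (G *\<^sub>v x)" unfolding sym
      by (rule comm_scalar_prod[of _ m], insert G xc yc, auto)
    finally show ?thesis .
  qed
  have "x \<bullet> (G *\<^sub>v y) = Im e * (x \<bullet> x) + Re e * (x \<bullet> y)"
    unfolding Gy using xc yc by (simp add: scalar_prod_add_distrib[of _ m])
  moreover have "y \<bullet> (G *\<^sub>v x) = Re e * (y \<bullet> x) - Im e * (y \<bullet> y)"
    unfolding Gx using xc yc by (simp add: scalar_prod_minus_distrib[of _ m])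
  moreover have "y \<bullet> x = x \<bullet> y" using comm_scalar_prod[OF xc yc] by simp
  ultimately have "Im e * (x \<bullet> x + y \<bullet> y) = 0" using symm by (simp add: algebra_simps)
  moreover have "0 < x \<bullet> x + y \<bullet> y"
  proof -
    obtain i where i: "i < m" "v $ i \<noteq> 0" using v by (metis carrier_vecD eq_vecI index_zero_vec(1,2))
    have "x $ i \<noteq> 0 \<or> y $ i \<noteq> 0" using i unfolding x_def y_def by (auto simp: complex_eq_iff)
    thus ?thesis using sprod_self_pos[of i x] sprod_self_pos[of i y] sprod_self_nonneg[of x]
      sprod_self_nonneg[of y] xc yc i by auto
  qed
  ultimately have Im0: "Im e = 0" by simp
  have Gx': "G *\<^sub>v x = Re e \<cdot>\<^sub>v x" using Gx Im0 xc yc by auto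
  have Gy': "G *\<^sub>v y = Re e \<cdot>\<^sub>v y" using Gy Im0 xc yc by auto
  obtain z where z: "z \<in> carrier_vec m" "0 < z \<bullet> z" "G *\<^sub>v z = Re e \<cdot>\<^sub>v z"
  proof (cases "0 < x \<bullet> x")
    case True thus ?thesis using that[of x] xc Gx' by auto
  next
    case False
    hence "x \<bullet> x = 0" using sprod_self_nonneg[of x] by auto
    hence "0 < y \<bullet> y" using \<open>0 < x \<bullet> x + y \<bullet> y\<close> by auto
    thus ?thesis using that[of y] yc Gy' by auto
  qed
  define u where "u = (1 / sqrt (z \<bullet> z)) \<cdot>\<^sub>v z"
  have "u \<bullet> u = 1" unfolding u_def using z
    by (simp add: power2_eq_square[symmetric])
  moreover have "G *\<^sub>v u = Re e \<cdot>\<^sub>v u" unfolding u_def using z G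
    by (simp add: mult_mat_vec smult_smult_assoc mult.commute)
  moreover have "u \<in> carrier_vec m" using z(1) unfolding u_def by auto
  ultimately show ?thesis by blast
qed

lemma householder:
  fixes u :: "real vec"
  assumes u: "u \<in> carrier_vec m" "u \<bullet> u = 1" "u $ 0 \<le> 0" and m: "0 < m"
  shows "\<exists>H \<in> carrier_mat m m. transpose_mat H = H \<and> H * H = 1\<^sub>m m \<and> H *\<^sub>v unit_vec m 0 = u"
proof -
  define w where "w = u - unit_vec m 0"
  have wc: "w \<in> carrier_vec m" unfolding w_def using u by auto
  have w0: "w $ 0 = u $ 0 - 1" unfolding w_def using u m by auto
  have c: "w \<bullet> w = 2 - 2 * u $ 0"
    unfolding w_def using u m
    by (simp add: minus_scalar_prod_distrib[of _ m] scalar_prod_minus_distrib[of _ m]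
        comm_scalar_prod[of u m "unit_vec m 0"])
  define a where "a = 2 / (w \<bullet> w)"
  have cpos: "w \<bullet> w > 0" using c u by auto
  define H where "H = mat m m (\<lambda>(i,j). (if i = j then 1 else 0) - a * (w $ i * w $ j))"
  have Hc: "H \<in> carrier_mat m m" unfolding H_def by auto
  have HT: "transpose_mat H = H" unfolding H_def by (rule eq_matI, auto simp: mult.commute)
  have rowH: "row H i = unit_vec m i - (a * w $ i) \<cdot>\<^sub>v w" if "i < m" for i
    unfolding H_def using that wc by (intro eq_vecI, auto)
  have colH: "col H j = unit_vec m j - (a * w $ j) \<cdot>\<^sub>v w" if "j < m" for j
    unfolding H_def using that wc by (intro eq_vecI, auto simp: mult.commute)
  have HH: "H * H = 1\<^sub>m m"
  proof (rule eq_matI)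
    fix i j assume "i < dim_row (1\<^sub>m m :: real mat)" "j < dim_col (1\<^sub>m m :: real mat)"
    hence i: "i < m" and j: "j < m" by auto
    have "(H * H) $$ (i,j) = row H i \<bullet> col H j" using i j Hc by simp
    also have "\<dots> = (unit_vec m i - (a * w $ i) \<cdot>\<^sub>v w) \<bullet> (unit_vec m j - (a * w $ j) \<cdot>\<^sub>v w)"
      using rowH[OF i] colH[OF j] by simp
    also have "\<dots> = (if i = j then 1 else 0) - a * w$i * w$j - a * w$j * w$i + a * w$i * (a * w$j) * (w \<bullet> w)"
      using wc i j
      by (simp add: minus_scalar_prod_distrib[of _ m] scalar_prod_minus_distrib[of _ m]
        comm_scalar_prod[of w m "unit_vec m _"] algebra_simps)
    also have "\<dots> = (if i = j then 1 else 0)" unfolding a_def using cpos by (simp add: field_simps)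
    finally show "(H * H) $$ (i,j) = 1\<^sub>m m $$ (i,j)" using i j by simp
  qed (insert Hc, auto)
  have "H *\<^sub>v unit_vec m 0 = col H 0"
    using Hc m by (intro eq_vecI, auto)
  also have "\<dots> = unit_vec m 0 - (a * w $ 0) \<cdot>\<^sub>v w" using colH m by auto
  also have "a * w $ 0 = -1" unfolding a_def c w0 using u by (simp add: field_simps)
  also have "unit_vec m 0 - (-1) \<cdot>\<^sub>v w = u" unfolding w_def using u m by (intro eq_vecI, auto)
  finally show ?thesis using Hc HT HH by blast
qed

lemma spectral_sym:
  fixes G :: "real mat"
  assumes "G \<in> carrier_mat m m" "transpose_mat G = G"
  shows "\<exists>U \<in> carrier_mat m m. transpose_mat U * U = 1\<^sub>m m \<and> diagonal_mat (transpose_mat U * G * U)"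
  using assms
proof (induction m arbitrary: G)
  case 0
  show ?case by (intro bexI[of _ "1\<^sub>m 0"], auto simp: diagonal_mat_def)
next
  case (Suc m G)
  let ?N = "Suc m"
  have G: "G \<in> carrier_mat ?N ?N" and sym: "transpose_mat G = G" using Suc by auto
  obtain u0 lam where u0: "u0 \<in> carrier_vec ?N" "u0 \<bullet> u0 = 1" "G *\<^sub>v u0 = lam \<cdot>\<^sub>v u0"
    using real_sym_eigvec[OF G sym] by auto
  define u where "u = (if u0 $ 0 \<le> 0 then u0 else (-1) \<cdot>\<^sub>v u0)"
  have u: "u \<in> carrier_vec ?N" "u \<bullet> u = 1" "G *\<^sub>v u = lam \<cdot>\<^sub>v u" "u $ 0 \<le> 0"
    using u0 G unfolding u_def by (auto simp: mult_mat_vec smult_smult_assoc mult.commute)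
  obtain H where Hc: "H \<in> carrier_mat ?N ?N" and HT: "transpose_mat H = H" and HH: "H * H = 1\<^sub>m ?N"
    and He: "H *\<^sub>v unit_vec ?N 0 = u"
    using householder[OF u(1,2,4)] by auto
  define G1 where "G1 = H * G * H"
  have G1c: "G1 \<in> carrier_mat ?N ?N" unfolding G1_def using Hc G by auto
  have G1T: "transpose_mat G1 = G1"
  proof -
    have "transpose_mat (H * G * H) = transpose_mat H * transpose_mat (H * G)"
      by (rule transpose_mult[of _ ?N ?N], insert Hc G, auto)
    also have "transpose_mat (H * G) = transpose_mat G * transpose_mat H"
      by (rule transpose_mult[of _ ?N ?N], insert Hc G, auto)
    finally show ?thesis unfolding G1_def HT sym using Hc G by simp
  qed
  have Hu: "H *\<^sub>v u = unit_vec ?N 0"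
  proof -
    have "H *\<^sub>v u = (H * H) *\<^sub>v unit_vec ?N 0" unfolding He[symmetric] using Hc by simp
    thus ?thesis using HH by simp
  qed
  have G1e: "G1 *\<^sub>v unit_vec ?N 0 = lam \<cdot>\<^sub>v unit_vec ?N 0"
  proof -
    have "G1 *\<^sub>v unit_vec ?N 0 = H *\<^sub>v (G *\<^sub>v (H *\<^sub>v unit_vec ?N 0))"
      unfolding G1_def using Hc G by (simp add: assoc_mult_mat_vec[of _ ?N ?N _ ?N])
    also have "\<dots> = lam \<cdot>\<^sub>v unit_vec ?N 0" unfolding He u(3) using Hc u(1)
      by (simp add: mult_mat_vec Hu)
    finally show ?thesis .
  qed
  have col0: "G1 $$ (i,0) = (if i = 0 then lam else 0)" if i: "i < ?N" for i
  proof -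
    have "G1 $$ (i,0) = (G1 *\<^sub>v unit_vec ?N 0) $ i" using i G1c by simp
    thus ?thesis unfolding G1e using i by simp
  qed
  have row0: "G1 $$ (0,j) = (if j = 0 then lam else 0)" if j: "j < ?N" for j
  proof -
    have "G1 $$ (0,j) = transpose_mat G1 $$ (j,0)" using j G1c by simp
    thus ?thesis unfolding G1T using col0[OF j] by simp
  qed
  define G' where "G' = mat m m (\<lambda>(i,j). G1 $$ (Suc i, Suc j))"
  have G'c: "G' \<in> carrier_mat m m" unfolding G'_def by auto
  have G'T: "transpose_mat G' = G'" unfolding G'_def
  proof (rule eq_matI)
    fix i j assume "i < dim_row (mat m m (\<lambda>(i,j). G1 $$ (Suc i, Suc j)))"
      "j < dim_col (mat m m (\<lambda>(i,j). G1 $$ (Suc i, Suc j)))"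
    hence ij: "i < m" "j < m" by auto
    have "G1 $$ (Suc j, Suc i) = transpose_mat G1 $$ (Suc i, Suc j)" using ij G1c by simp
    thus "transpose_mat (mat m m (\<lambda>(i,j). G1 $$ (Suc i, Suc j))) $$ (i,j) = mat m m (\<lambda>(i,j). G1 $$ (Suc i, Suc j)) $$ (i,j)"
      using ij G1T by simp
  qed auto
  obtain U' where U'c: "U' \<in> carrier_mat m m" and U'o: "transpose_mat U' * U' = 1\<^sub>m m"
    and U'd: "diagonal_mat (transpose_mat U' * G' * U')"
    using Suc.IH[OF G'c G'T] by auto
  define L where "L = mat 1 1 (\<lambda>_. lam)"
  have Lc: "L \<in> carrier_mat 1 1" unfolding L_def by auto
  have G1b: "G1 = four_block_mat L (0\<^sub>m 1 m) (0\<^sub>m m 1) G'"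
  proof (rule eq_matI)
    fix i j assume "i < dim_row (four_block_mat L (0\<^sub>m 1 m) (0\<^sub>m m 1) G')"
      "j < dim_col (four_block_mat L (0\<^sub>m 1 m) (0\<^sub>m m 1) G')"
    hence ij: "i < ?N" "j < ?N" using Lc G'c by auto
    show "G1 $$ (i,j) = four_block_mat L (0\<^sub>m 1 m) (0\<^sub>m m 1) G' $$ (i,j)"
    proof (cases "i = 0 \<or> j = 0")
      case True
      thus ?thesis using ij Lc G'c col0 row0 unfolding L_def by auto
    next
      case False
      then obtain i' j' where "i = Suc i'" "j = Suc j'" by (cases i; cases j; auto)
      thus ?thesis using ij Lc G'c unfolding G'_def by auto
    qed
  qed (insert Lc G'c G1c, auto)
  define B where "B = four_block_mat (1\<^sub>m 1) (0\<^sub>m 1 m) (0\<^sub>m m 1) U'"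
  have Bc: "B \<in> carrier_mat ?N ?N" unfolding B_def using U'c by auto
  have BT: "transpose_mat B = four_block_mat (1\<^sub>m 1) (0\<^sub>m 1 m) (0\<^sub>m m 1) (transpose_mat U')"
    unfolding B_def using U'c by (subst transpose_four_block_mat, auto)
  define U where "U = H * B"
  have Uc: "U \<in> carrier_mat ?N ?N" unfolding U_def using Hc Bc by auto
  have UT: "transpose_mat U = transpose_mat B * H" unfolding U_def using Hc Bc HT
    by (simp add: transpose_mult[of _ ?N ?N])
  have BTc: "transpose_mat B \<in> carrier_mat ?N ?N" using Bc by simp
  have "transpose_mat U * U = transpose_mat B * H * (H * B)"
    unfolding UT unfolding U_def by simp
  also have "\<dots> = transpose_mat B * (H * H) * B"
    using Hc Bc BTc by (simp add: assoc_mult_mat[of _ ?N ?N _ ?N _ ?N])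
  also have "\<dots> = transpose_mat B * B" using HH Bc by simp
  also have "\<dots> = 1\<^sub>m ?N" unfolding BT unfolding B_def using U'c U'o
    by (subst mult_four_block_mat[of _ 1 1 _ m _ m _ _ 1 _ m], auto)
  finally have Uo: "transpose_mat U * U = 1\<^sub>m ?N" .
  have "transpose_mat U * G * U = transpose_mat B * H * G * (H * B)"
    unfolding UT unfolding U_def by simp
  also have "\<dots> = transpose_mat B * G1 * B"
    unfolding G1_def using Hc Bc BTc G by (simp add: assoc_mult_mat[of _ ?N ?N _ ?N _ ?N])
  also have "\<dots> = transpose_mat B * (G1 * B)" using Bc G1c by simp
  also have "G1 * B = four_block_mat L (0\<^sub>m 1 m) (0\<^sub>m m 1) (G' * U')"
    unfolding G1b B_def using U'c G'c Lc
    by (subst mult_four_block_mat[of _ 1 1 _ m _ m _ _ 1 _ m], auto)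
  also have "transpose_mat B * \<dots> = four_block_mat L (0\<^sub>m 1 m) (0\<^sub>m m 1) (transpose_mat U' * (G' * U'))"
    unfolding BT using U'c G'c Lc
    by (subst mult_four_block_mat[of _ 1 1 _ m _ m _ _ 1 _ m], auto)
  finally have eq: "transpose_mat U * G * U = four_block_mat L (0\<^sub>m 1 m) (0\<^sub>m m 1) (transpose_mat U' * G' * U')"
    using U'c G'c by simp
  have "diagonal_mat (transpose_mat U * G * U)"
    unfolding eq diagonal_mat_def
  proof (intro allI impI)
    fix i j assume i: "i < dim_row (four_block_mat L (0\<^sub>m 1 m) (0\<^sub>m m 1) (transpose_mat U' * G' * U'))"
      and j: "j < dim_col (four_block_mat L (0\<^sub>m 1 m) (0\<^sub>m m 1) (transpose_mat U' * G' * U'))"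
      and ij: "i \<noteq> j"
    have ij': "i < ?N" "j < ?N" using i j Lc U'c G'c by auto
    show "four_block_mat L (0\<^sub>m 1 m) (0\<^sub>m m 1) (transpose_mat U' * G' * U') $$ (i,j) = 0"
    proof (cases "i = 0 \<or> j = 0")
      case True thus ?thesis using ij ij' Lc U'c G'c by auto
    next
      case False
      then obtain i' j' where ij2: "i = Suc i'" "j = Suc j'" by (cases i; cases j; auto)
      hence "(transpose_mat U' * G' * U') $$ (i',j') = 0" using U'd ij ij' U'c G'c
        unfolding diagonal_mat_def by auto
      thus ?thesis using ij2 ij' Lc U'c G'c by auto
    qed
  qed
  with Uc Uo show ?case by blast
qed

lemma mult_unit_col: fixes X :: "real mat" assumes "X \<in> carrier_mat a b" "j < b"
  shows "X *\<^sub>v unit_vec b j = col X j"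
  using assms by (intro eq_vecI, auto)

lemma mat_entry_vec: fixes X :: "real mat" assumes X: "X \<in> carrier_mat a b" and i: "i < a" and j: "j < b"
  shows "X $$ (i,j) = unit_vec a i \<bullet> (X *\<^sub>v unit_vec b j)"
  using assms by simp

lemma mat_eq_vec: fixes A B :: "real mat" assumes A: "A \<in> carrier_mat a b" and B: "B \<in> carrier_mat a b"
  and eq: "\<And>x. x \<in> carrier_vec b \<Longrightarrow> A *\<^sub>v x = B *\<^sub>v x"
  shows "A = B"
proof (rule eq_matI)
  fix i j assume "i < dim_row B" "j < dim_col B"
  hence i: "i < a" and j: "j < b" using B by auto
  have "A $$ (i,j) = (A *\<^sub>v unit_vec b j) $ i" using A i j by simp
  also have "\<dots> = (B *\<^sub>v unit_vec b j) $ i" using eq[of "unit_vec b j"] by simp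
  also have "\<dots> = B $$ (i,j)" using B i j by simp
  finally show "A $$ (i,j) = B $$ (i,j)" .
qed (insert A B, auto)

definition dg :: "nat \<Rightarrow> (nat \<Rightarrow> real) \<Rightarrow> real mat" where
  "dg m f = mat m m (\<lambda>(i,j). if i = j then f i else 0)"

lemma dg_carrier[simp]: "dg m f \<in> carrier_mat m m" unfolding dg_def by auto

lemma dg_dims[simp]: "dim_row (dg m f) = m" "dim_col (dg m f) = m" unfolding dg_def by auto

lemma dg_T: "transpose_mat (dg m f) = dg m f"
  unfolding dg_def by (rule eq_matI, auto)

lemma dg_one: "dg m (\<lambda>_. 1) = 1\<^sub>m m"
  unfolding dg_def by (rule eq_matI, auto)

lemma dg_mult: "dg m f * dg m g = dg m (\<lambda>i. f i * g i)"
proof (rule eq_matI)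
  fix i j assume "i < dim_row (dg m (\<lambda>i. f i * g i))" "j < dim_col (dg m (\<lambda>i. f i * g i))"
  hence i: "i < m" and j: "j < m" by (auto simp: dg_def)
  have "(dg m f * dg m g) $$ (i,j) = (\<Sum>l\<in>{0..<m}. (if i = l then f i else 0) * (if l = j then g l else 0))"
    using i j unfolding dg_def by (simp add: scalar_prod_def)
  also have "\<dots> = (\<Sum>l\<in>{0..<m}. if l = i then (if i = j then f i * g i else 0) else 0)"
    by (rule sum.cong, auto)
  also have "\<dots> = (if i = j then f i * g i else 0)" using i by simp
  finally show "(dg m f * dg m g) $$ (i,j) = dg m (\<lambda>i. f i * g i) $$ (i,j)"
    using i j unfolding dg_def by simp
qed (auto simp: dg_def)

lemma dg_quad: assumes y: "y \<in> carrier_vec m"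
  shows "y \<bullet> (dg m f *\<^sub>v y) = (\<Sum>i<m. f i * (y$i)^2)"
proof -
  have row: "row (dg m f) i \<bullet> y = f i * y $ i" if i: "i < m" for i
  proof -
    have "row (dg m f) i \<bullet> y = (\<Sum>l\<in>{0..<m}. (if i = l then f i else 0) * y $ l)"
      using i y unfolding dg_def by (simp add: scalar_prod_def)
    also have "\<dots> = (\<Sum>l\<in>{0..<m}. if l = i then f i * y $ i else 0)"
      by (rule sum.cong, auto)
    finally show ?thesis using i by simp
  qed
  have "y \<bullet> (dg m f *\<^sub>v y) = (\<Sum>i\<in>{0..<m}. y $ i * (row (dg m f) i \<bullet> y))"
    using y unfolding scalar_prod_def[of y] by simp
  also have "\<dots> = (\<Sum>i<m. f i * (y$i)^2)" using row
    by (auto simp: lessThan_atLeast0 power2_eq_square intro!: sum.cong)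
  finally show ?thesis .
qed

lemma pad_le: fixes M N :: "real mat"
  assumes M: "M \<in> carrier_mat a b" and N: "N \<in> carrier_mat b a" and MN: "M * N = 1\<^sub>m a"
  shows "a \<le> b"
proof (rule ccontr)
  assume "\<not> a \<le> b"
  hence ba: "b < a" by simp
  define M' where "M' = mat a a (\<lambda>(i,j). if j < b then M $$ (i,j) else 0)"
  define N' where "N' = mat a a (\<lambda>(i,j). if i < b then N $$ (i,j) else 0)"
  have M'c: "M' \<in> carrier_mat a a" and N'c: "N' \<in> carrier_mat a a" unfolding M'_def N'_def by auto
  have "M' * N' = 1\<^sub>m a"
  proof (rule eq_matI)
    fix i j assume "i < dim_row (1\<^sub>m a :: real mat)" "j < dim_col (1\<^sub>m a :: real mat)"
    hence i: "i < a" and j: "j < a" by auto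
    have "(M' * N') $$ (i,j) = (\<Sum>l\<in>{0..<a}. (if l < b then M $$ (i,l) * N $$ (l,j) else 0))"
      using i j unfolding M'_def N'_def by (auto simp: scalar_prod_def intro!: sum.cong)
    also have "\<dots> = (\<Sum>l\<in>{0..<b}. (if l < b then M $$ (i,l) * N $$ (l,j) else 0))"
      by (rule sum.mono_neutral_right, insert ba, auto)
    also have "\<dots> = (\<Sum>l\<in>{0..<b}. M $$ (i,l) * N $$ (l,j))" by (rule sum.cong, auto)
    also have "\<dots> = (M * N) $$ (i,j)" using M N i j by (simp add: scalar_prod_def)
    finally show "(M' * N') $$ (i,j) = 1\<^sub>m a $$ (i,j)" using MN by simp
  qed (insert M'c N'c, auto)
  hence NM: "N' * M' = 1\<^sub>m a" using mat_mult_left_right_inverse[OF M'c N'c] by simp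
  have a0: "a - 1 < a" "b \<le> a - 1" using ba by auto
  have "(N' * M') $$ (a - 1, a - 1) = (\<Sum>l\<in>{0..<a}. N' $$ (a - 1, l) * M' $$ (l, a - 1))"
    using a0 M'c N'c by (simp add: scalar_prod_def)
  also have "\<dots> = 0" using a0 unfolding N'_def by (auto intro!: sum.neutral)
  finally show False using NM a0 by simp
qed

lemma hcat_carrier: "P1 \<in> carrier_mat n k \<Longrightarrow> P2 \<in> carrier_mat n m \<Longrightarrow> hcat P1 P2 \<in> carrier_mat n (k + m)"
  unfolding hcat_def by auto

lemma col_hcat: assumes "P1 \<in> carrier_mat n k" "P2 \<in> carrier_mat n m" "j < k + m"
  shows "col (hcat P1 P2) j = (if j < k then col P1 j else col P2 (j - k))"
  using assms unfolding hcat_def by (intro eq_vecI, auto)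

lemma sum_split_add: fixes k m :: nat shows "(\<Sum>l<k+m. f l) = (\<Sum>l<k. f l) + (\<Sum>l<m. (f (l+k) :: real))"
proof -
  have "(\<Sum>l<k+m. f l) = sum f {0..<k} + sum f {k..<k+m}"
    unfolding lessThan_atLeast0 by (rule sum.atLeastLessThan_concat[symmetric], auto)
  also have "sum f {k..<k+m} = sum f {0+k..<m+k}" by (simp add: ac_simps)
  also have "\<dots> = (\<Sum>l\<in>{0..<m}. f (l+k))" by (rule sum.shift_bounds_nat_ivl)
  finally show ?thesis by (simp add: lessThan_atLeast0)
qed

lemma row_sprod_hcat: fixes P1 P2 Q1 Q2 :: "real mat" assumes P1: "P1 \<in> carrier_mat n k" and P2: "P2 \<in> carrier_mat n m"
  and Q1: "Q1 \<in> carrier_mat n' k" and Q2: "Q2 \<in> carrier_mat n' m" and i: "i < n" and j: "j < n'"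
  shows "row (hcat P1 P2) i \<bullet> row (hcat Q1 Q2) j = row P1 i \<bullet> row Q1 j + row P2 i \<bullet> row Q2 j"
proof -
  have "row (hcat P1 P2) i \<bullet> row (hcat Q1 Q2) j = (\<Sum>l<k+m. (if l < k then P1 $$ (i,l) * Q1 $$ (j,l) else P2 $$ (i, l-k) * Q2 $$ (j, l-k)))"
    using assms unfolding hcat_def scalar_prod_def by (auto simp: lessThan_atLeast0 intro!: sum.cong)
  also have "\<dots> = (\<Sum>l<k. (if l < k then P1 $$ (i,l) * Q1 $$ (j,l) else P2 $$ (i, l-k) * Q2 $$ (j, l-k)))
     + (\<Sum>l<m. (if l + k < k then P1 $$ (i,l+k) * Q1 $$ (j,l+k) else P2 $$ (i, l+k-k) * Q2 $$ (j, l+k-k)))"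
    by (simp only: sum_split_add)
  also have "\<dots> = row P1 i \<bullet> row Q1 j + row P2 i \<bullet> row Q2 j"
    using assms unfolding scalar_prod_def by (auto simp: lessThan_atLeast0)
  finally show ?thesis .
qed

lemma sprod_mat: fixes B :: "real mat"
  assumes B: "B \<in> carrier_mat a b" and x: "x \<in> carrier_vec a" and y: "y \<in> carrier_vec b"
  shows "x \<bullet> (B *\<^sub>v y) = (transpose_mat B *\<^sub>v x) \<bullet> y"
  using transpose_vec_mult_scalar[OF B y x] by simp

lemma sprod_matT: fixes B :: "real mat"
  assumes B: "B \<in> carrier_mat a b" and x: "x \<in> carrier_vec b" and y: "y \<in> carrier_vec a"
  shows "x \<bullet> (transpose_mat B *\<^sub>v y) = (B *\<^sub>v x) \<bullet> y"
proof -
  have "x \<bullet> (transpose_mat B *\<^sub>v y) = (transpose_mat B *\<^sub>v y) \<bullet> x"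
    by (rule comm_scalar_prod[of _ b], insert B x y, auto)
  also have "\<dots> = y \<bullet> (B *\<^sub>v x)" by (rule transpose_vec_mult_scalar[OF B x y])
  also have "\<dots> = (B *\<^sub>v x) \<bullet> y" by (rule comm_scalar_prod[of _ a], insert B x y, auto)
  finally show ?thesis .
qed

lemma vnorm_unit: "i < m \<Longrightarrow> vnorm (unit_vec m i :: real vec) = 1"
  unfolding vnorm_def by simp

lemma polar_part:
  fixes S :: "real mat" and m :: nat and c :: real
  assumes Sc: "S \<in> carrier_mat m m" and c: "0 < c"
    and Sb: "\<And>v. v \<in> carrier_vec m \<Longrightarrow> c * vnorm v \<le> vnorm (S *\<^sub>v v)"
  shows "\<exists>Om Hi. Om \<in> carrier_mat m m \<and> Hi \<in> carrier_mat m m \<and>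
     transpose_mat Om * Om = 1\<^sub>m m \<and> Om * transpose_mat Om = 1\<^sub>m m \<and> Om = S * Hi \<and>
     (\<forall>w \<in> carrier_vec m. c * (w \<bullet> w) \<le> w \<bullet> ((transpose_mat Om * S) *\<^sub>v w))"
proof -
  define G where "G = transpose_mat S * S"
  have Gc: "G \<in> carrier_mat m m" unfolding G_def using Sc by auto
  have GT: "transpose_mat G = G" unfolding G_def using Sc by (simp add: transpose_mult[of _ m m])
  obtain U where Uc: "U \<in> carrier_mat m m" and UTU: "transpose_mat U * U = 1\<^sub>m m"
    and Ud: "diagonal_mat (transpose_mat U * G * U)"
    using spectral_sym[OF Gc GT] by auto
  have UTc: "transpose_mat U \<in> carrier_mat m m" using Uc by simp
  have UUT: "U * transpose_mat U = 1\<^sub>m m" using mat_mult_left_right_inverse[OF UTc Uc UTU] .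
  define L where "L = transpose_mat U * G * U"
  have Lc: "L \<in> carrier_mat m m" unfolding L_def using Uc Gc by auto
  have Lii: "L $$ (i,i) = (S *\<^sub>v (U *\<^sub>v unit_vec m i)) \<bullet> (S *\<^sub>v (U *\<^sub>v unit_vec m i))" if i: "i < m" for i
  proof -
    let ?e = "unit_vec m i :: real vec"
    have ec: "?e \<in> carrier_vec m" by simp
    have "L $$ (i,i) = ?e \<bullet> (L *\<^sub>v ?e)" using mat_entry_vec[OF Lc i i] .
    also have "L *\<^sub>v ?e = transpose_mat U *\<^sub>v (transpose_mat S *\<^sub>v (S *\<^sub>v (U *\<^sub>v ?e)))"
      unfolding L_def G_def using Uc Sc UTc
      by (simp add: assoc_mult_mat_vec[of _ m m _ m] assoc_mult_mat[of _ m m _ m _ m])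
    also have "?e \<bullet> \<dots> = (U *\<^sub>v ?e) \<bullet> (transpose_mat S *\<^sub>v (S *\<^sub>v (U *\<^sub>v ?e)))"
      by (rule sprod_matT[OF Uc ec], insert Sc Uc, auto)
    also have "\<dots> = (S *\<^sub>v (U *\<^sub>v ?e)) \<bullet> (S *\<^sub>v (U *\<^sub>v ?e))"
      by (rule sprod_matT[OF Sc], insert Sc Uc, auto)
    finally show ?thesis .
  qed
  have Lge: "c^2 \<le> L $$ (i,i)" if i: "i < m" for i
  proof -
    let ?e = "unit_vec m i :: real vec"
    have Ue: "U *\<^sub>v ?e \<in> carrier_vec m" using Uc by simp
    have "vnorm (U *\<^sub>v ?e) = 1" using isometry(2)[OF Uc UTU, of ?e] vnorm_unit[OF i] by simp
    hence "c \<le> vnorm (S *\<^sub>v (U *\<^sub>v ?e))" using Sb[OF Ue] by simp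
    hence "c^2 \<le> (vnorm (S *\<^sub>v (U *\<^sub>v ?e)))^2" using c by (intro power_mono, auto)
    thus ?thesis unfolding Lii[OF i] vnorm_sq .
  qed
  define s where "s i = sqrt (L $$ (i,i))" for i
  have s_ge: "c \<le> s i" if "i < m" for i
  proof -
    have "sqrt (c^2) \<le> s i" unfolding s_def by (rule real_sqrt_le_mono[OF Lge[OF that]])
    thus ?thesis using c by simp
  qed
  have s_pos: "0 < s i" if "i < m" for i using s_ge[OF that] c by simp
  have LD: "L = dg m (\<lambda>i. s i * s i)"
  proof (rule eq_matI)
    fix i j assume "i < dim_row (dg m (\<lambda>i. s i * s i))" "j < dim_col (dg m (\<lambda>i. s i * s i))"
    hence i: "i < m" and j: "j < m" by auto
    show "L $$ (i,j) = dg m (\<lambda>i. s i * s i) $$ (i,j)"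
    proof (cases "i = j")
      case True
      have "0 \<le> L $$ (i,i)" using Lge[OF i] by (rule order_trans[OF zero_le_power2])
      thus ?thesis using True i unfolding s_def dg_def by simp
    next
      case False
      thus ?thesis using Ud i j Lc unfolding L_def[symmetric] diagonal_mat_def dg_def by auto
    qed
  qed (insert Lc, auto)
  have GU: "G = U * L * transpose_mat U"
  proof -
    have "U * L * transpose_mat U = (U * transpose_mat U) * G * (U * transpose_mat U)"
      unfolding L_def using Uc UTc Gc by (simp add: assoc_mult_mat[of _ m m _ m _ m])
    thus ?thesis using UUT Gc by simp
  qed
  define Di where "Di = dg m (\<lambda>i. 1 / s i)"
  define Ds where "Ds = dg m s"
  have Dic: "Di \<in> carrier_mat m m" and Dsc: "Ds \<in> carrier_mat m m" unfolding Di_def Ds_def by auto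
  have DiL: "Di * L = Ds" unfolding Di_def Ds_def LD dg_mult
    by (rule arg_cong[of _ _ "dg m"], rule ext, simp)
  have DsDi: "Ds * Di = 1\<^sub>m m"
  proof -
    have "Ds * Di = dg m (\<lambda>i. s i * (1 / s i))" unfolding Di_def Ds_def dg_mult ..
    also have "\<dots> = dg m (\<lambda>_. 1)" unfolding dg_def
      by (rule eq_matI, insert s_pos, auto simp: less_le)
    finally show ?thesis unfolding dg_one .
  qed
  define Hi where "Hi = U * Di * transpose_mat U"
  define Hh where "Hh = U * Ds * transpose_mat U"
  have Hic: "Hi \<in> carrier_mat m m" and Hhc: "Hh \<in> carrier_mat m m"
    unfolding Hi_def Hh_def using Uc Dic Dsc by auto
  have HiT: "transpose_mat Hi = Hi"
  proof -
    have "transpose_mat Hi = transpose_mat (transpose_mat U) * transpose_mat (U * Di)"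
      unfolding Hi_def by (rule transpose_mult[of _ m m], insert Uc Dic, auto)
    also have "transpose_mat (U * Di) = transpose_mat Di * transpose_mat U"
      by (rule transpose_mult[of _ m m], insert Uc Dic, auto)
    finally show ?thesis unfolding Hi_def Di_def dg_T using Uc UTc
      by (simp add: assoc_mult_mat[of _ m m _ m _ m])
  qed
  have HiG: "Hi * G = Hh"
  proof -
    have "Hi * G = U * (Di * (transpose_mat U * U) * L) * transpose_mat U"
      unfolding Hi_def GU using Uc UTc Dic Lc by (simp add: assoc_mult_mat[of _ m m _ m _ m])
    also have "\<dots> = Hh" unfolding UTU Hh_def DiL[symmetric] using Dic Lc by simp
    finally show ?thesis .
  qed
  have HhHi: "Hh * Hi = 1\<^sub>m m"
  proof -
    have "Hh * Hi = U * (Ds * (transpose_mat U * U) * Di) * transpose_mat U"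
      unfolding Hi_def Hh_def using Uc UTc Dic Dsc by (simp add: assoc_mult_mat[of _ m m _ m _ m])
    also have "\<dots> = 1\<^sub>m m" unfolding UTU using Dsc DsDi UUT Uc by simp
    finally show ?thesis .
  qed
  define Om where "Om = S * Hi"
  have Oc: "Om \<in> carrier_mat m m" unfolding Om_def using Sc Hic by auto
  have OTc: "transpose_mat Om \<in> carrier_mat m m" using Oc by simp
  have OTS: "transpose_mat Om * S = Hh"
  proof -
    have "transpose_mat Om = transpose_mat Hi * transpose_mat S"
      unfolding Om_def by (rule transpose_mult[of _ m m], insert Sc Hic, auto)
    hence "transpose_mat Om * S = Hi * G" unfolding HiT G_def using Hic Sc
      by (simp add: assoc_mult_mat[of _ m m _ m _ m])
    thus ?thesis using HiG by simp
  qed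
  have OTO: "transpose_mat Om * Om = 1\<^sub>m m"
  proof -
    have "transpose_mat Om * Om = (transpose_mat Om * S) * Hi" unfolding Om_def using OTc Sc Hic
      by (simp add: assoc_mult_mat[of _ m m _ m _ m])
    thus ?thesis using OTS HhHi by simp
  qed
  have OOT: "Om * transpose_mat Om = 1\<^sub>m m" using mat_mult_left_right_inverse[OF OTc Oc OTO] .
  have quad: "c * (w \<bullet> w) \<le> w \<bullet> ((transpose_mat Om * S) *\<^sub>v w)" if w: "w \<in> carrier_vec m" for w
  proof -
    define y where "y = transpose_mat U *\<^sub>v w"
    have yc: "y \<in> carrier_vec m" unfolding y_def using Uc w by simp
    have "w \<bullet> ((transpose_mat Om * S) *\<^sub>v w) = w \<bullet> (U *\<^sub>v (Ds *\<^sub>v y))"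
      unfolding OTS Hh_def y_def using Uc UTc Dsc w
      by (simp add: assoc_mult_mat_vec[of _ m m _ m] assoc_mult_mat[of _ m m _ m _ m])
    also have "\<dots> = y \<bullet> (Ds *\<^sub>v y)"
      unfolding y_def by (rule sprod_mat[OF Uc w], insert Dsc Uc w, auto)
    also have "\<dots> = (\<Sum>i<m. s i * (y$i)^2)" unfolding Ds_def by (rule dg_quad[OF yc])
    finally have eq: "w \<bullet> ((transpose_mat Om * S) *\<^sub>v w) = (\<Sum>i<m. s i * (y$i)^2)" .
    have "y \<bullet> y = w \<bullet> w" unfolding y_def
      by (rule isometry(1)[of _ m m], insert Uc w UUT, auto)
    hence "c * (w \<bullet> w) = c * (y \<bullet> y)" by simp
    also have "\<dots> = (\<Sum>i<m. c * (y$i)^2)" unfolding sprod_self_sum' using yc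
      by (simp add: sum_distrib_left)
    also have "\<dots> \<le> (\<Sum>i<m. s i * (y$i)^2)"
      by (rule sum_mono, rule mult_right_mono, insert s_ge, auto)
    finally show ?thesis unfolding eq .
  qed
  show ?thesis
    by (rule exI[of _ Om], rule exI[of _ Hi], insert Oc Hic OTO OOT quad, auto simp: Om_def)
qed

lemma core:
  fixes A P1 P2 Q :: "real mat" and n k m :: nat and \<xi> :: real
  assumes A: "A \<in> carrier_mat n n"
    and P1: "P1 \<in> carrier_mat n k" and P1o: "transpose_mat P1 * P1 = 1\<^sub>m k"
    and P2: "P2 \<in> carrier_mat n m" and P2o: "transpose_mat P2 * P2 = 1\<^sub>m m"
    and Q: "Q \<in> carrier_mat n m" and Qo: "transpose_mat Q * Q = 1\<^sub>m m"
    and P21: "transpose_mat P2 * P1 = 0\<^sub>m m k"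
    and split: "P1 * transpose_mat P1 + P2 * transpose_mat P2 = 1\<^sub>m n"
    and nkm: "n = k + m"
    and sig: "1 - \<xi> < sigma_min (transpose_mat P2 * Q)"
    and xi: "0 < \<xi>" "\<xi> < 1" and m0: "0 < m"
    and inv: "\<And>x. x \<in> carrier_vec m \<Longrightarrow> \<exists>y \<in> carrier_vec m. A *\<^sub>v (Q *\<^sub>v x) = Q *\<^sub>v y"
  shows "\<exists>Q2. Q2 \<in> carrier_mat n m \<and> transpose_mat Q2 * Q2 = 1\<^sub>m m \<and>
     {Q2 *\<^sub>v v | v. v \<in> carrier_vec m} = {Q *\<^sub>v v | v. v \<in> carrier_vec m} \<and>
     (let P = hcat P1 P2; M = transpose_mat P * A * P;
         \<Delta> = mat k m (\<lambda>(i, j). M $$ (i, j + k)); Qb = hcat P1 Q2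
     in \<exists>Qi. Qi \<in> carrier_mat n n \<and> Qi * Qb = 1\<^sub>m n \<and> Qb * Qi = 1\<^sub>m n \<and>
       (let R1 = mat k n (\<lambda>(i, j). Qi $$ (i, j));
            R2 = mat m n (\<lambda>(i, j). Qi $$ (i + k, j));
            N2 = R2 * A * Q2
        in sigma_min (transpose_mat P2 * Q2) \<ge> 1 - \<xi> \<and>
           op_norm (transpose_mat P1 * Q2) \<le> sqrt (2 * \<xi>) \<and>
           op_norm (P2 - Q2) \<le> sqrt (2 * \<xi>) \<and>
           op_norm R2 \<le> 1 / (1 - \<xi>) \<and>
           op_norm N2 \<le> 1 / (1 - \<xi>) * op_norm A \<and>
           op_norm (transpose_mat P1 - R1) \<le> sqrt (2 * \<xi>) / (1 - \<xi>) \<and>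
           op_norm R1 \<le> 1 + sqrt (2 * \<xi>) / (1 - \<xi>) \<and>
           op_norm \<Delta> \<le> (2 - \<xi>) / (1 - \<xi>) * sqrt (2 * \<xi>) * op_norm A))"
proof -
  define c where "c = 1 - \<xi>"
  have c: "0 < c" "c \<le> 1" unfolding c_def using xi by auto
  have P1T: "transpose_mat P1 \<in> carrier_mat k n" and P2T: "transpose_mat P2 \<in> carrier_mat m n"
    and QT: "transpose_mat Q \<in> carrier_mat m n" using P1 P2 Q by auto
  define S where "S = transpose_mat P2 * Q"
  have Sc: "S \<in> carrier_mat m m" unfolding S_def using P2 Q by auto
  have Sb: "c * vnorm v \<le> vnorm (S *\<^sub>v v)" if v: "v \<in> carrier_vec m" for v
  proof -
    have "c * vnorm v \<le> sigma_min S * vnorm v"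
      using sig vnorm_nonneg[of v] unfolding c_def S_def by (intro mult_right_mono, auto)
    also have "\<dots> \<le> vnorm (S *\<^sub>v v)" by (rule sigma_min_lower, insert v Sc, auto)
    finally show ?thesis .
  qed
  obtain Om Hi where Oc: "Om \<in> carrier_mat m m" and Hic: "Hi \<in> carrier_mat m m"
    and OTO: "transpose_mat Om * Om = 1\<^sub>m m" and OOT: "Om * transpose_mat Om = 1\<^sub>m m"
    and OSH: "Om = S * Hi"
    and quad0: "\<And>w. w \<in> carrier_vec m \<Longrightarrow> c * (w \<bullet> w) \<le> w \<bullet> ((transpose_mat Om * S) *\<^sub>v w)"
    using polar_part[OF Sc c(1) Sb] by blast
  have OTc: "transpose_mat Om \<in> carrier_mat m m" using Oc by simp
  define Q2 where "Q2 = Q * transpose_mat Om"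
  have Q2c: "Q2 \<in> carrier_mat n m" unfolding Q2_def using Q Oc by auto
  have Q2T: "transpose_mat Q2 \<in> carrier_mat m n" using Q2c by simp
  have Q2o: "transpose_mat Q2 * Q2 = 1\<^sub>m m"
  proof -
    have "transpose_mat Q2 = Om * transpose_mat Q" unfolding Q2_def
      by (subst transpose_mult[of _ n m _ m], insert Q Oc, auto)
    hence "transpose_mat Q2 * Q2 = Om * transpose_mat Q * (Q * transpose_mat Om)" unfolding Q2_def by simp
    also have "\<dots> = Om * (transpose_mat Q * (Q * transpose_mat Om))"
      by (rule assoc_mult_mat[of _ m m _ n _ m], insert Oc QT Q OTc, auto)
    also have "transpose_mat Q * (Q * transpose_mat Om) = (transpose_mat Q * Q) * transpose_mat Om"
      by (rule assoc_mult_mat[symmetric, of _ m n _ m _ m], insert QT Q OTc, auto)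
    finally have "transpose_mat Q2 * Q2 = Om * (transpose_mat Q * Q * transpose_mat Om)" .
    thus ?thesis using Qo OOT OTc by simp
  qed
  have Q2v: "Q2 *\<^sub>v v = Q *\<^sub>v (transpose_mat Om *\<^sub>v v)" if "v \<in> carrier_vec m" for v
    unfolding Q2_def using that Q OTc by simp
  have Qv: "Q *\<^sub>v w = Q2 *\<^sub>v (Om *\<^sub>v w)" if w: "w \<in> carrier_vec m" for w
  proof -
    have "transpose_mat Om *\<^sub>v (Om *\<^sub>v w) = w"
      using w Oc OTc OTO by (simp add: assoc_mult_mat_vec[symmetric, of _ m m _ m])
    thus ?thesis using Q2v[of "Om *\<^sub>v w"] Oc w by simp
  qed
  have colsp: "{Q2 *\<^sub>v v | v. v \<in> carrier_vec m} = {Q *\<^sub>v v | v. v \<in> carrier_vec m}"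
  proof (intro subsetI equalityI)
    fix x assume "x \<in> {Q2 *\<^sub>v v | v. v \<in> carrier_vec m}"
    then obtain v where v: "v \<in> carrier_vec m" and x: "x = Q2 *\<^sub>v v" by auto
    have "x = Q *\<^sub>v (transpose_mat Om *\<^sub>v v)" "transpose_mat Om *\<^sub>v v \<in> carrier_vec m"
      using Q2v[OF v] x OTc v by auto
    thus "x \<in> {Q *\<^sub>v v | v. v \<in> carrier_vec m}" by blast
  next
    fix x assume "x \<in> {Q *\<^sub>v v | v. v \<in> carrier_vec m}"
    then obtain v where v: "v \<in> carrier_vec m" and x: "x = Q *\<^sub>v v" by auto
    have "x = Q2 *\<^sub>v (Om *\<^sub>v v)" "Om *\<^sub>v v \<in> carrier_vec m"
      using Qv[OF v] x Oc v by auto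
    thus "x \<in> {Q2 *\<^sub>v v | v. v \<in> carrier_vec m}" by blast
  qed
  define T where "T = transpose_mat P2 * Q2"
  have Tc: "T \<in> carrier_mat m m" unfolding T_def using P2T Q2c by auto
  have TS: "T = S * transpose_mat Om" unfolding T_def S_def Q2_def using P2T Q OTc
    by (simp add: assoc_mult_mat[of _ m n _ m _ m])
  have quadT: "c * (v \<bullet> v) \<le> v \<bullet> (T *\<^sub>v v)" if v: "v \<in> carrier_vec m" for v
  proof -
    define w where "w = transpose_mat Om *\<^sub>v v"
    have wc: "w \<in> carrier_vec m" unfolding w_def using v OTc by simp
    have vw: "v = Om *\<^sub>v w" unfolding w_def using v Oc OTc OOT
      by (simp add: assoc_mult_mat_vec[symmetric, of _ m m _ m])
    have "v \<bullet> (T *\<^sub>v v) = (Om *\<^sub>v w) \<bullet> (S *\<^sub>v w)"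
      unfolding TS using Sc OTc v by (simp add: w_def[symmetric] vw[symmetric])
    also have "\<dots> = w \<bullet> (transpose_mat Om *\<^sub>v (S *\<^sub>v w))"
      by (rule sprod_matT[OF Oc wc, symmetric], insert Sc wc, auto)
    also have "\<dots> = w \<bullet> ((transpose_mat Om * S) *\<^sub>v w)" using OTc Sc wc by simp
    finally have eq: "v \<bullet> (T *\<^sub>v v) = w \<bullet> ((transpose_mat Om * S) *\<^sub>v w)" .
    have "w \<bullet> w = v \<bullet> v" unfolding w_def by (rule isometry(1)[of _ m m], insert OTc v OOT, auto)
    thus ?thesis using quad0[OF wc] eq by simp
  qed
  have Tlow: "c * vnorm v \<le> vnorm (T *\<^sub>v v)" if v: "v \<in> carrier_vec m" for v
  proof (cases "vnorm v = 0")
    case True thus ?thesis using vnorm_nonneg[of "T *\<^sub>v v"] by simp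
  next
    case False
    hence pos: "0 < vnorm v" using vnorm_nonneg[of v] by simp
    have "c * (vnorm v * vnorm v) \<le> v \<bullet> (T *\<^sub>v v)" using quadT[OF v] vnorm_sq[of v]
      by (simp add: power2_eq_square)
    also have "\<dots> \<le> vnorm v * vnorm (T *\<^sub>v v)"
      using cauchy_schwarz[of v m "T *\<^sub>v v"] v Tc by auto
    finally have "(c * vnorm v) * vnorm v \<le> vnorm (T *\<^sub>v v) * vnorm v" by (simp add: ac_simps)
    thus ?thesis using pos by simp
  qed
  define Tinv where "Tinv = Om * Hi * transpose_mat Om"
  have Tinvc: "Tinv \<in> carrier_mat m m" unfolding Tinv_def using Oc Hic by auto
  have TTinv: "T * Tinv = 1\<^sub>m m"
  proof -
    have "T * Tinv = S * (transpose_mat Om * Om) * Hi * transpose_mat Om"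
      unfolding TS Tinv_def using Sc OTc Oc Hic by (simp add: assoc_mult_mat[of _ m m _ m _ m])
    also have "\<dots> = Om * transpose_mat Om" unfolding OTO using Sc by (simp add: OSH[symmetric])
    finally show ?thesis using OOT by simp
  qed
  have TinvT: "Tinv * T = 1\<^sub>m m" using mat_mult_left_right_inverse[OF Tc Tinvc TTinv] .
  have splitv: "x \<bullet> x = (transpose_mat P1 *\<^sub>v x) \<bullet> (transpose_mat P1 *\<^sub>v x) + (transpose_mat P2 *\<^sub>v x) \<bullet> (transpose_mat P2 *\<^sub>v x)"
    if x: "x \<in> carrier_vec n" for x
  proof -
    have "x = (P1 * transpose_mat P1 + P2 * transpose_mat P2) *\<^sub>v x" using split x by simp
    also have "\<dots> = P1 *\<^sub>v (transpose_mat P1 *\<^sub>v x) + P2 *\<^sub>v (transpose_mat P2 *\<^sub>v x)"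
      using P1 P2 P1T P2T x by (simp add: add_mult_distrib_mat_vec[of _ n n])
    finally have "x \<bullet> x = x \<bullet> (P1 *\<^sub>v (transpose_mat P1 *\<^sub>v x) + P2 *\<^sub>v (transpose_mat P2 *\<^sub>v x))" by simp
    also have "\<dots> = x \<bullet> (P1 *\<^sub>v (transpose_mat P1 *\<^sub>v x)) + x \<bullet> (P2 *\<^sub>v (transpose_mat P2 *\<^sub>v x))"
      by (rule scalar_prod_add_distrib[of _ n], insert x P1 P2, auto)
    also have "x \<bullet> (P1 *\<^sub>v (transpose_mat P1 *\<^sub>v x)) = (transpose_mat P1 *\<^sub>v x) \<bullet> (transpose_mat P1 *\<^sub>v x)"
      by (rule sprod_mat[OF P1 x], insert P1T x, auto)
    also have "x \<bullet> (P2 *\<^sub>v (transpose_mat P2 *\<^sub>v x)) = (transpose_mat P2 *\<^sub>v x) \<bullet> (transpose_mat P2 *\<^sub>v x)"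
      by (rule sprod_mat[OF P2 x], insert P2T x, auto)
    finally show ?thesis .
  qed
  have bP1T: "bnd (transpose_mat P1) 1"
  proof (rule bndI[OF P1T])
    fix x :: "real vec" assume x: "x \<in> carrier_vec n"
    have h: "(vnorm (transpose_mat P1 *\<^sub>v x))^2 \<le> (vnorm x)^2" unfolding vnorm_sq
      using splitv[OF x] sprod_self_nonneg'[of "transpose_mat P2 *\<^sub>v x"] by linarith
    show "vnorm (transpose_mat P1 *\<^sub>v x) \<le> 1 * vnorm x"
      using power2_le_imp_le[OF h vnorm_nonneg[of x]] by simp
  qed
  have bP2T: "bnd (transpose_mat P2) 1"
  proof (rule bndI[OF P2T])
    fix x :: "real vec" assume x: "x \<in> carrier_vec n"
    have h: "(vnorm (transpose_mat P2 *\<^sub>v x))^2 \<le> (vnorm x)^2" unfolding vnorm_sq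
      using splitv[OF x] sprod_self_nonneg'[of "transpose_mat P1 *\<^sub>v x"] by linarith
    show "vnorm (transpose_mat P2 *\<^sub>v x) \<le> 1 * vnorm x"
      using power2_le_imp_le[OF h vnorm_nonneg[of x]] by simp
  qed
  have bQ2: "bnd Q2 1" by (rule bnd_isometry[OF Q2c Q2o])
  have bTinv: "bnd Tinv (1 / c)"
  proof (rule bndI[OF Tinvc])
    fix x :: "real vec" assume x: "x \<in> carrier_vec m"
    have "T *\<^sub>v (Tinv *\<^sub>v x) = x" using TTinv Tc Tinvc x
      by (simp add: assoc_mult_mat_vec[symmetric, of _ m m _ m])
    hence "c * vnorm (Tinv *\<^sub>v x) \<le> vnorm x" using Tlow[of "Tinv *\<^sub>v x"] Tinvc x by simp
    thus "vnorm (Tinv *\<^sub>v x) \<le> 1 / c * vnorm x" using c by (simp add: field_simps)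
  qed
  have xi2: "0 \<le> 2 * \<xi>" using xi by simp
  have bP1Q2: "bnd (transpose_mat P1 * Q2) (sqrt (2 * \<xi>))"
  proof (rule bndI[of _ k m])
    show "transpose_mat P1 * Q2 \<in> carrier_mat k m" using P1T Q2c by auto
    fix v :: "real vec" assume v: "v \<in> carrier_vec m"
    have qv: "Q2 *\<^sub>v v \<in> carrier_vec n" using Q2c v by simp
    have "v \<bullet> v = (transpose_mat P1 *\<^sub>v (Q2 *\<^sub>v v)) \<bullet> (transpose_mat P1 *\<^sub>v (Q2 *\<^sub>v v)) + (T *\<^sub>v v) \<bullet> (T *\<^sub>v v)"
      using splitv[OF qv] isometry(1)[OF Q2c Q2o v] unfolding T_def using P2T Q2c v by simp
    moreover have "c^2 * (v \<bullet> v) \<le> (T *\<^sub>v v) \<bullet> (T *\<^sub>v v)"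
    proof -
      have "(c * vnorm v)^2 \<le> (vnorm (T *\<^sub>v v))^2" using Tlow[OF v] c vnorm_nonneg[of v]
        by (intro power_mono, auto)
      thus ?thesis unfolding power_mult_distrib vnorm_sq .
    qed
    moreover have "(vnorm ((transpose_mat P1 * Q2) *\<^sub>v v))^2 = (transpose_mat P1 *\<^sub>v (Q2 *\<^sub>v v)) \<bullet> (transpose_mat P1 *\<^sub>v (Q2 *\<^sub>v v))"
      unfolding vnorm_sq using P1T Q2c v by simp
    moreover have "(1 - c^2) * (v \<bullet> v) = v \<bullet> v - c^2 * (v \<bullet> v)" by (simp add: left_diff_distrib)
    ultimately have "(vnorm ((transpose_mat P1 * Q2) *\<^sub>v v))^2 \<le> (1 - c^2) * (v \<bullet> v)"
      by linarith
    also have "\<dots> \<le> (2 * \<xi>) * (v \<bullet> v)"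
      by (rule mult_right_mono, unfold c_def, insert sprod_self_nonneg'[of v], auto simp: power2_eq_square algebra_simps)
    also have "\<dots> = (sqrt (2 * \<xi>) * vnorm v)^2" using xi2 by (simp add: power_mult_distrib vnorm_sq)
    finally have h: "(vnorm ((transpose_mat P1 * Q2) *\<^sub>v v))^2 \<le> (sqrt (2 * \<xi>) * vnorm v)^2" .
    show "vnorm ((transpose_mat P1 * Q2) *\<^sub>v v) \<le> sqrt (2 * \<xi>) * vnorm v"
      by (rule power2_le_imp_le[OF h], insert vnorm_nonneg[of v] xi2, simp)
  qed
  have bPQ: "bnd (P2 - Q2) (sqrt (2 * \<xi>))"
  proof (rule bndI[of _ n m])
    show "P2 - Q2 \<in> carrier_mat n m" using P2 Q2c by auto
    fix v :: "real vec" assume v: "v \<in> carrier_vec m"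
    have pv: "P2 *\<^sub>v v \<in> carrier_vec n" and qv: "Q2 *\<^sub>v v \<in> carrier_vec n" using P2 Q2c v by auto
    have "(P2 - Q2) *\<^sub>v v = P2 *\<^sub>v v - Q2 *\<^sub>v v" using P2 Q2c v by (simp add: minus_mult_distrib_mat_vec)
    hence "(vnorm ((P2 - Q2) *\<^sub>v v))^2 = (P2 *\<^sub>v v) \<bullet> (P2 *\<^sub>v v) - 2 * ((P2 *\<^sub>v v) \<bullet> (Q2 *\<^sub>v v)) + (Q2 *\<^sub>v v) \<bullet> (Q2 *\<^sub>v v)"
      unfolding vnorm_sq using pv qv
      by (simp add: minus_scalar_prod_distrib[of _ n] scalar_prod_minus_distrib[of _ n] comm_scalar_prod[of "Q2 *\<^sub>v v" n "P2 *\<^sub>v v"])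
    also have "(P2 *\<^sub>v v) \<bullet> (Q2 *\<^sub>v v) = v \<bullet> (T *\<^sub>v v)"
    proof -
      have "(P2 *\<^sub>v v) \<bullet> (Q2 *\<^sub>v v) = v \<bullet> (transpose_mat P2 *\<^sub>v (Q2 *\<^sub>v v))"
        by (rule sprod_matT[OF P2 v qv, symmetric])
      thus ?thesis unfolding T_def using P2T Q2c v by simp
    qed
    also have "(P2 *\<^sub>v v) \<bullet> (P2 *\<^sub>v v) = v \<bullet> v" by (rule isometry(1)[OF P2 P2o v])
    also have "(Q2 *\<^sub>v v) \<bullet> (Q2 *\<^sub>v v) = v \<bullet> v" by (rule isometry(1)[OF Q2c Q2o v])
    also have "v \<bullet> v - 2 * (v \<bullet> (T *\<^sub>v v)) + v \<bullet> v \<le> (2 * \<xi>) * (v \<bullet> v)"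
      using quadT[OF v] unfolding c_def by (simp add: algebra_simps)
    also have "\<dots> = (sqrt (2 * \<xi>) * vnorm v)^2" using xi2 by (simp add: power_mult_distrib vnorm_sq)
    finally have h: "(vnorm ((P2 - Q2) *\<^sub>v v))^2 \<le> (sqrt (2 * \<xi>) * vnorm v)^2" .
    show "vnorm ((P2 - Q2) *\<^sub>v v) \<le> sqrt (2 * \<xi>) * vnorm v"
      by (rule power2_le_imp_le[OF h], insert vnorm_nonneg[of v] xi2, simp)
  qed
  define X where "X = transpose_mat P1 * Q2 * Tinv * transpose_mat P2"
  have Xc: "X \<in> carrier_mat k n" unfolding X_def using P1T Q2c Tinvc P2T by auto
  have PQc: "transpose_mat P1 * Q2 \<in> carrier_mat k m" using P1T Q2c by auto
  have PQTc: "transpose_mat P1 * Q2 * Tinv \<in> carrier_mat k m" using PQc Tinvc by auto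
  define R1' where "R1' = transpose_mat P1 - X"
  define R2' where "R2' = Tinv * transpose_mat P2"
  have R1'c: "R1' \<in> carrier_mat k n" unfolding R1'_def using P1T Xc by auto
  have R2'c: "R2' \<in> carrier_mat m n" unfolding R2'_def using Tinvc P2T by auto
  have XP1: "X * P1 = 0\<^sub>m k k"
  proof -
    have "X * P1 = (transpose_mat P1 * Q2 * Tinv) * (transpose_mat P2 * P1)"
      unfolding X_def by (rule assoc_mult_mat[of _ k m _ n _ k], insert PQTc P2T P1, auto)
    thus ?thesis unfolding P21 using PQTc by (simp add: right_mult_zero_mat)
  qed
  have XQ2: "X * Q2 = transpose_mat P1 * Q2"
  proof -
    have "X * Q2 = (transpose_mat P1 * Q2 * Tinv) * (transpose_mat P2 * Q2)"
      unfolding X_def by (rule assoc_mult_mat[of _ k m _ n _ m], insert PQTc P2T Q2c, auto)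
    also have "\<dots> = (transpose_mat P1 * Q2) * (Tinv * T)" unfolding T_def[symmetric]
      by (rule assoc_mult_mat[of _ k m _ m _ m], insert PQc Tinvc Tc, auto)
    finally show ?thesis unfolding TinvT using right_mult_one_mat[OF PQc] by simp
  qed
  have R1P1: "R1' * P1 = 1\<^sub>m k"
  proof -
    have "R1' * P1 = transpose_mat P1 * P1 - X * P1" unfolding R1'_def
      by (rule minus_mult_distrib_mat[of _ k n], insert P1T Xc P1, auto)
    thus ?thesis unfolding P1o XP1 by (auto intro!: eq_matI)
  qed
  have R1Q2: "R1' * Q2 = 0\<^sub>m k m"
  proof -
    have "R1' * Q2 = transpose_mat P1 * Q2 - X * Q2" unfolding R1'_def
      by (rule minus_mult_distrib_mat[of _ k n], insert P1T Xc Q2c, auto)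
    thus ?thesis unfolding XQ2 using PQc by (auto intro!: eq_matI)
  qed
  have R2P1: "R2' * P1 = 0\<^sub>m m k"
  proof -
    have "R2' * P1 = Tinv * (transpose_mat P2 * P1)" unfolding R2'_def
      by (rule assoc_mult_mat[of _ m m _ n _ k], insert Tinvc P2T P1, auto)
    thus ?thesis unfolding P21 using Tinvc by (simp add: right_mult_zero_mat)
  qed
  have R2Q2: "R2' * Q2 = 1\<^sub>m m"
  proof -
    have "R2' * Q2 = Tinv * (transpose_mat P2 * Q2)" unfolding R2'_def
      by (rule assoc_mult_mat[of _ m m _ n _ m], insert Tinvc P2T Q2c, auto)
    thus ?thesis unfolding T_def[symmetric] TinvT .
  qed
  define Qi where "Qi = mat n n (\<lambda>(i,j). if i < k then R1' $$ (i,j) else R2' $$ (i - k, j))"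
  define Qb where "Qb = hcat P1 Q2"
  have Qic: "Qi \<in> carrier_mat n n" unfolding Qi_def by auto
  have Qbc: "Qb \<in> carrier_mat n n" unfolding Qb_def using hcat_carrier[OF P1 Q2c] nkm by simp
  have rowQi: "row Qi i = (if i < k then row R1' i else row R2' (i - k))" if i: "i < n" for i
    unfolding Qi_def using i R1'c R2'c nkm by (intro eq_vecI, auto)
  have colQb: "col Qb j = (if j < k then col P1 j else col Q2 (j - k))" if j: "j < n" for j
    unfolding Qb_def by (rule col_hcat[OF P1 Q2c], insert j nkm, auto)
  have QiQb: "Qi * Qb = 1\<^sub>m n"
  proof (rule eq_matI)
    fix i j assume "i < dim_row (1\<^sub>m n :: real mat)" "j < dim_col (1\<^sub>m n :: real mat)"
    hence i: "i < n" and j: "j < n" by auto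
    have "(Qi * Qb) $$ (i,j) = row Qi i \<bullet> col Qb j" using Qic Qbc i j by simp
    also have "\<dots> = 1\<^sub>m n $$ (i,j)"
    proof (cases "i < k"; cases "j < k")
      assume "i < k" "j < k"
      hence "row R1' i \<bullet> col P1 j = (R1' * P1) $$ (i,j)" using R1'c P1 by simp
      thus ?thesis using rowQi[OF i] colQb[OF j] \<open>i < k\<close> \<open>j < k\<close> i j unfolding R1P1 by simp
    next
      assume "i < k" "\<not> j < k"
      hence "row R1' i \<bullet> col Q2 (j - k) = (R1' * Q2) $$ (i,j - k)" using R1'c Q2c j nkm by simp
      thus ?thesis using rowQi[OF i] colQb[OF j] \<open>i < k\<close> \<open>\<not> j < k\<close> i j nkm unfolding R1Q2 by simp
    next
      assume "\<not> i < k" "j < k"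
      hence "row R2' (i - k) \<bullet> col P1 j = (R2' * P1) $$ (i - k,j)" using R2'c P1 i nkm by simp
      thus ?thesis using rowQi[OF i] colQb[OF j] \<open>\<not> i < k\<close> \<open>j < k\<close> i j nkm unfolding R2P1 by simp
    next
      assume "\<not> i < k" "\<not> j < k"
      hence "row R2' (i - k) \<bullet> col Q2 (j - k) = (R2' * Q2) $$ (i - k,j - k)" using R2'c Q2c i j nkm by simp
      thus ?thesis using rowQi[OF i] colQb[OF j] \<open>\<not> i < k\<close> \<open>\<not> j < k\<close> i j nkm unfolding R2Q2 by auto
    qed
    finally show "(Qi * Qb) $$ (i,j) = 1\<^sub>m n $$ (i,j)" .
  qed (insert Qic Qbc, auto)
  have QbQi: "Qb * Qi = 1\<^sub>m n" using mat_mult_left_right_inverse[OF Qic Qbc QiQb] .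
  have R1eq: "mat k n (\<lambda>(i,j). Qi $$ (i,j)) = R1'"
    unfolding Qi_def using R1'c nkm by (intro eq_matI, auto)
  have R2eq: "mat m n (\<lambda>(i,j). Qi $$ (i + k, j)) = R2'"
    unfolding Qi_def using R2'c nkm by (intro eq_matI, auto)
  define N2 where "N2 = R2' * A * Q2"
  have R2Ac: "R2' * A \<in> carrier_mat m n" using R2'c A by auto
  have N2c: "N2 \<in> carrier_mat m m" unfolding N2_def using R2Ac Q2c by auto
  have sqrt_nn: "0 \<le> sqrt (2 * \<xi>)" using xi2 by simp
  have opA: "0 \<le> op_norm A" by (rule op_norm_nonneg)
  have c1: "0 \<le> 1 / c" using c by simp
  have b_sig: "1 - \<xi> \<le> sigma_min (transpose_mat P2 * Q2)" unfolding T_def[symmetric]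
  proof (rule sigma_min_ge)
    show "0 < dim_col T" using Tc m0 by simp
    fix v assume v: "v \<in> carrier_vec (dim_col T)" "vnorm v = 1"
    thus "1 - \<xi> \<le> vnorm (T *\<^sub>v v)" using Tlow[of v] Tc unfolding c_def by simp
  qed
  have b1: "op_norm (transpose_mat P1 * Q2) \<le> sqrt (2 * \<xi>)" by (rule op_norm_le[OF bP1Q2 sqrt_nn])
  have b2: "op_norm (P2 - Q2) \<le> sqrt (2 * \<xi>)" by (rule op_norm_le[OF bPQ sqrt_nn])
  have bR2: "bnd R2' (1 / c * 1)" unfolding R2'_def by (rule bnd_mult[OF Tinvc P2T bTinv bP2T c1])
  have b3: "op_norm R2' \<le> 1 / (1 - \<xi>)" using op_norm_le[OF bR2] c unfolding c_def by simp
  have bN2: "bnd N2 (1 / c * 1 * op_norm A * 1)" unfolding N2_def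
    by (rule bnd_mult[OF R2Ac Q2c _ bQ2], rule bnd_mult[OF R2'c A bR2 bnd_op_norm], insert c1 opA, auto)
  have b4: "op_norm N2 \<le> 1 / (1 - \<xi>) * op_norm A" using op_norm_le[OF bN2] c1 opA unfolding c_def by simp
  have XR: "transpose_mat P1 - R1' = X" unfolding R1'_def using P1T Xc by (intro eq_matI, auto)
  have bX: "bnd X (sqrt (2 * \<xi>) * (1 / c) * 1)" unfolding X_def
    by (rule bnd_mult[OF PQTc P2T _ bP2T], rule bnd_mult[OF PQc Tinvc bP1Q2 bTinv sqrt_nn],
        insert sqrt_nn c1, auto)
  have b5: "op_norm (transpose_mat P1 - R1') \<le> sqrt (2 * \<xi>) / (1 - \<xi>)" unfolding XR
    using op_norm_le[OF bX] sqrt_nn c1 unfolding c_def by simp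
  have bR1: "bnd R1' (1 + sqrt (2 * \<xi>) * (1 / c) * 1)" unfolding R1'_def
    by (rule bnd_minus[OF P1T Xc bP1T bX])
  have b6: "op_norm R1' \<le> 1 + sqrt (2 * \<xi>) / (1 - \<xi>)"
    using op_norm_le[OF bR1] sqrt_nn c1 unfolding c_def by simp
  define P where "P = hcat P1 P2"
  have Pc: "P \<in> carrier_mat n n" unfolding P_def using hcat_carrier[OF P1 P2] nkm by simp
  have PTc: "transpose_mat P \<in> carrier_mat n n" using Pc by simp
  have colP: "col P j = (if j < k then col P1 j else col P2 (j - k))" if j: "j < n" for j
    unfolding P_def by (rule col_hcat[OF P1 P2], insert j nkm, auto)
  define M where "M = transpose_mat P * A * P"
  have P1AP2c: "transpose_mat P1 * A * P2 \<in> carrier_mat k m" using P1T A P2 by auto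
  have Deq: "mat k m (\<lambda>(i,j). M $$ (i, j + k)) = transpose_mat P1 * A * P2"
  proof (rule eq_matI)
    fix i j assume "i < dim_row (transpose_mat P1 * A * P2)" "j < dim_col (transpose_mat P1 * A * P2)"
    hence i: "i < k" and j: "j < m" using P1AP2c by auto
    have in_: "i < n" "j + k < n" using i j nkm by auto
    have "M $$ (i, j + k) = unit_vec n i \<bullet> (M *\<^sub>v unit_vec n (j + k))"
      by (rule mat_entry_vec[OF _ in_], unfold M_def, insert PTc A Pc, auto)
    also have "M *\<^sub>v unit_vec n (j + k) = transpose_mat P *\<^sub>v (A *\<^sub>v col P2 j)"
    proof -
      have "P *\<^sub>v unit_vec n (j + k) = col P2 j" using mult_unit_col[OF Pc in_(2)] colP[OF in_(2)] by simp
      thus ?thesis unfolding M_def using PTc A Pc by (simp add: assoc_mult_mat_vec[of _ n n _ n])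
    qed
    also have "unit_vec n i \<bullet> (transpose_mat P *\<^sub>v (A *\<^sub>v col P2 j)) = (P *\<^sub>v unit_vec n i) \<bullet> (A *\<^sub>v col P2 j)"
      by (rule sprod_matT[OF Pc], insert A P2 j, auto)
    also have "P *\<^sub>v unit_vec n i = col P1 i" using mult_unit_col[OF Pc in_(1)] colP[OF in_(1)] i by simp
    finally have e1: "M $$ (i, j + k) = col P1 i \<bullet> (A *\<^sub>v col P2 j)" .
    have "(transpose_mat P1 * A * P2) $$ (i,j) = unit_vec k i \<bullet> ((transpose_mat P1 * A * P2) *\<^sub>v unit_vec m j)"
      by (rule mat_entry_vec[OF P1AP2c i j])
    also have "(transpose_mat P1 * A * P2) *\<^sub>v unit_vec m j = transpose_mat P1 *\<^sub>v (A *\<^sub>v col P2 j)"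
      using P1T A P2 j mult_unit_col[OF P2 j] by (simp add: assoc_mult_mat_vec[of _ k n _ m])
    also have "unit_vec k i \<bullet> (transpose_mat P1 *\<^sub>v (A *\<^sub>v col P2 j)) = (P1 *\<^sub>v unit_vec k i) \<bullet> (A *\<^sub>v col P2 j)"
      by (rule sprod_matT[OF P1], insert A P2 j i, auto)
    also have "P1 *\<^sub>v unit_vec k i = col P1 i" by (rule mult_unit_col[OF P1 i])
    finally show "mat k m (\<lambda>(i,j). M $$ (i, j + k)) $$ (i,j) = (transpose_mat P1 * A * P2) $$ (i,j)"
      using e1 i j by simp
  qed (insert P1AP2c, auto)
  have AQ2: "A * Q2 = Q2 * N2"
  proof (rule mat_eq_vec[of _ n m])
    show "A * Q2 \<in> carrier_mat n m" "Q2 * N2 \<in> carrier_mat n m" using A Q2c N2c by auto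
    fix x :: "real vec" assume x: "x \<in> carrier_vec m"
    have ox: "transpose_mat Om *\<^sub>v x \<in> carrier_vec m" using OTc x by simp
    obtain y where y: "y \<in> carrier_vec m" and yeq: "A *\<^sub>v (Q *\<^sub>v (transpose_mat Om *\<^sub>v x)) = Q *\<^sub>v y"
      using inv[OF ox] by auto
    define z where "z = Om *\<^sub>v y"
    have zc: "z \<in> carrier_vec m" unfolding z_def using Oc y by simp
    have AQx: "A *\<^sub>v (Q2 *\<^sub>v x) = Q2 *\<^sub>v z" unfolding Q2v[OF x] yeq Qv[OF y] z_def ..
    have "(A * Q2) *\<^sub>v x = Q2 *\<^sub>v z" using A Q2c x AQx by simp
    moreover have "(Q2 * N2) *\<^sub>v x = Q2 *\<^sub>v z"
    proof -
      have "N2 *\<^sub>v x = R2' *\<^sub>v (A *\<^sub>v (Q2 *\<^sub>v x))" unfolding N2_def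
        using R2'c A Q2c x by (simp add: assoc_mult_mat_vec[of _ m n _ m] assoc_mult_mat_vec[of _ m n _ n])
      also have "\<dots> = (R2' * Q2) *\<^sub>v z" unfolding AQx using R2'c Q2c zc by simp
      finally have "N2 *\<^sub>v x = z" unfolding R2Q2 using zc by simp
      thus ?thesis using Q2c N2c x by simp
    qed
    ultimately show "(A * Q2) *\<^sub>v x = (Q2 * N2) *\<^sub>v x" by simp
  qed
  define Y where "Y = transpose_mat P1 * Q2 * N2"
  have Yc: "Y \<in> carrier_mat k m" unfolding Y_def using PQc N2c by auto
  have P1Ac: "transpose_mat P1 * A \<in> carrier_mat k n" using P1T A by auto
  have PmQc: "P2 - Q2 \<in> carrier_mat n m" using P2 Q2c by auto
  have dec: "transpose_mat P1 * A * P2 = transpose_mat P1 * A * (P2 - Q2) + Y"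
  proof -
    have "transpose_mat P1 * A * (P2 - Q2) = transpose_mat P1 * A * P2 - transpose_mat P1 * A * Q2"
      by (rule mult_minus_distrib_mat[OF P1Ac P2 Q2c])
    also have "transpose_mat P1 * A * Q2 = Y"
    proof -
      have "transpose_mat P1 * A * Q2 = transpose_mat P1 * (A * Q2)"
        by (rule assoc_mult_mat[OF P1T A Q2c])
      also have "\<dots> = transpose_mat P1 * (Q2 * N2)" unfolding AQ2 ..
      also have "\<dots> = Y" unfolding Y_def by (rule assoc_mult_mat[symmetric, OF P1T Q2c N2c])
      finally show ?thesis .
    qed
    finally have "transpose_mat P1 * A * (P2 - Q2) = transpose_mat P1 * A * P2 - Y" .
    thus ?thesis using P1AP2c Yc by (intro eq_matI, auto)
  qed
  have bD1: "bnd (transpose_mat P1 * A * (P2 - Q2)) (1 * op_norm A * sqrt (2 * \<xi>))"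
    by (rule bnd_mult[OF P1Ac PmQc _ bPQ], rule bnd_mult[OF P1T A bP1T bnd_op_norm], insert opA, auto)
  have bY: "bnd Y (sqrt (2 * \<xi>) * (1 / c * 1 * op_norm A * 1))" unfolding Y_def
    by (rule bnd_mult[OF PQc N2c bP1Q2 bN2 sqrt_nn])
  have bD: "bnd (transpose_mat P1 * A * P2) (1 * op_norm A * sqrt (2 * \<xi>) + sqrt (2 * \<xi>) * (1 / c * 1 * op_norm A * 1))"
    unfolding dec by (rule bnd_add[OF _ Yc bD1 bY], insert P1Ac PmQc, auto)
  have eqD: "1 * op_norm A * sqrt (2 * \<xi>) + sqrt (2 * \<xi>) * (1 / c * 1 * op_norm A * 1)
      = (2 - \<xi>) / (1 - \<xi>) * sqrt (2 * \<xi>) * op_norm A"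
    unfolding c_def using xi by (simp add: field_simps)
  have b7: "op_norm (transpose_mat P1 * A * P2) \<le> (2 - \<xi>) / (1 - \<xi>) * sqrt (2 * \<xi>) * op_norm A"
    by (rule op_norm_le[OF bD[unfolded eqD]], insert xi sqrt_nn opA, auto)
  have main: "\<exists>Qi. Qi \<in> carrier_mat n n \<and> Qi * Qb = 1\<^sub>m n \<and> Qb * Qi = 1\<^sub>m n \<and>
       (let R1 = mat k n (\<lambda>(i, j). Qi $$ (i, j));
            R2 = mat m n (\<lambda>(i, j). Qi $$ (i + k, j));
            N2 = R2 * A * Q2
        in sigma_min (transpose_mat P2 * Q2) \<ge> 1 - \<xi> \<and>
           op_norm (transpose_mat P1 * Q2) \<le> sqrt (2 * \<xi>) \<and>
           op_norm (P2 - Q2) \<le> sqrt (2 * \<xi>) \<and>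
           op_norm R2 \<le> 1 / (1 - \<xi>) \<and>
           op_norm N2 \<le> 1 / (1 - \<xi>) * op_norm A \<and>
           op_norm (transpose_mat P1 - R1) \<le> sqrt (2 * \<xi>) / (1 - \<xi>) \<and>
           op_norm R1 \<le> 1 + sqrt (2 * \<xi>) / (1 - \<xi>) \<and>
           op_norm (mat k m (\<lambda>(i,j). M $$ (i, j + k))) \<le> (2 - \<xi>) / (1 - \<xi>) * sqrt (2 * \<xi>) * op_norm A)"
    by (rule exI[of _ Qi], unfold Let_def R1eq R2eq Deq N2_def[symmetric],
        insert Qic QiQb QbQi b_sig b1 b2 b3 b4 b5 b6 b7, auto)
  show ?thesis
    by (rule exI[of _ Q2], insert Q2c Q2o colsp main, unfold Let_def M_def P_def Qb_def, auto)
qed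

definition fstep :: "real \<times> real vec \<Rightarrow> real vec \<Rightarrow> real vec" where
  "fstep = (\<lambda>(c, v) acc. c \<cdot>\<^sub>v v + acc)"

lemma real_span_alt: "real_span n G = {x. \<exists>cs. set (map snd cs) \<subseteq> G \<and> x = foldr fstep cs (0\<^sub>v n)}"
  unfolding real_span_def fstep_def ..

lemma foldr_carrier: assumes "set (map snd cs) \<subseteq> carrier_vec n" "a \<in> carrier_vec n"
  shows "foldr fstep cs a \<in> carrier_vec n"
  using assms by (induction cs, auto simp: fstep_def)

lemma foldr_acc: assumes "set (map snd cs) \<subseteq> carrier_vec n" "a \<in> carrier_vec n"
  shows "foldr fstep cs a = foldr fstep cs (0\<^sub>v n) + a"
  using assms
proof (induction cs)
  case Nil thus ?case by simp
next
  case (Cons p cs)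
  obtain c v where p: "p = (c, v)" by (cases p)
  have v: "v \<in> carrier_vec n" using Cons p by auto
  have cs: "set (map snd cs) \<subseteq> carrier_vec n" using Cons by auto
  have f0: "foldr fstep cs (0\<^sub>v n) \<in> carrier_vec n" using foldr_carrier[OF cs] by simp
  show ?case using Cons(1)[OF cs Cons(3)] p v f0 Cons(3) by (simp add: fstep_def assoc_add_vec)
qed

lemma span_add: assumes G: "G \<subseteq> carrier_vec n" and x: "x \<in> real_span n G" and y: "y \<in> real_span n G"
  shows "x + y \<in> real_span n G"
proof -
  obtain cs1 where c1: "set (map snd cs1) \<subseteq> G" and x: "x = foldr fstep cs1 (0\<^sub>v n)"
    using x unfolding real_span_alt by auto
  obtain cs2 where c2: "set (map snd cs2) \<subseteq> G" and y: "y = foldr fstep cs2 (0\<^sub>v n)"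
    using y unfolding real_span_alt by auto
  have "foldr fstep (cs1 @ cs2) (0\<^sub>v n) = foldr fstep cs1 y" using y by simp
  also have "\<dots> = x + y" unfolding x
    by (rule foldr_acc, insert c1 G y foldr_carrier[of cs2 n "0\<^sub>v n"] c2, auto)
  finally show ?thesis unfolding real_span_alt using c1 c2
    by (intro CollectI exI[of _ "cs1 @ cs2"], auto)
qed

lemma span_smult: assumes G: "G \<subseteq> carrier_vec n" and x: "x \<in> real_span n G"
  shows "a \<cdot>\<^sub>v x \<in> real_span n G"
proof -
  obtain cs where c: "set (map snd cs) \<subseteq> G" and x: "x = foldr fstep cs (0\<^sub>v n)"
    using x unfolding real_span_alt by auto
  have "a \<cdot>\<^sub>v foldr fstep cs (0\<^sub>v n) = foldr fstep (map (\<lambda>(d,v). (a * d, v)) cs) (0\<^sub>v n)"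
    using c
  proof (induction cs)
    case Nil thus ?case by auto
  next
    case (Cons p cs)
    obtain d v where p: "p = (d, v)" by (cases p)
    have v: "v \<in> carrier_vec n" using Cons p G by auto
    have cs: "set (map snd cs) \<subseteq> G" using Cons by auto
    have f0: "foldr fstep cs (0\<^sub>v n) \<in> carrier_vec n" using foldr_carrier[of cs n] cs G by auto
    show ?case using Cons(1)[OF cs] p v f0
      by (simp add: fstep_def smult_add_distrib_vec[of _ n] smult_smult_assoc)
  qed
  moreover have "set (map snd (map (\<lambda>(d,v). (a * d, v)) cs)) \<subseteq> G" using c by auto
  ultimately show ?thesis unfolding real_span_alt x by blast
qed

lemma span_zero: "0\<^sub>v n \<in> real_span n G"
  unfolding real_span_alt by (intro CollectI exI[of _ "[]"], auto)

lemma span_two: assumes G: "G \<subseteq> carrier_vec n" "g \<in> G" "h \<in> G"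
  shows "a \<cdot>\<^sub>v g + b \<cdot>\<^sub>v h \<in> real_span n G"
proof -
  have "foldr fstep [(a, g), (b, h)] (0\<^sub>v n) = a \<cdot>\<^sub>v g + b \<cdot>\<^sub>v h"
    using G by (auto simp: fstep_def)
  moreover have "set (map snd [(a, g), (b, h)]) \<subseteq> G" using G by auto
  ultimately show ?thesis unfolding real_span_alt by (intro CollectI exI[of _ "[(a,g),(b,h)]"], auto)
qed

lemma span_linmap: assumes G: "G \<subseteq> carrier_vec n" and A: "A \<in> carrier_mat n n"
  and gen: "\<And>g. g \<in> G \<Longrightarrow> A *\<^sub>v g \<in> real_span n G"
  and x: "x \<in> real_span n G"
  shows "A *\<^sub>v x \<in> real_span n G"
proof -
  obtain cs where c: "set (map snd cs) \<subseteq> G" and x: "x = foldr fstep cs (0\<^sub>v n)"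
    using x unfolding real_span_alt by auto
  show ?thesis unfolding x using c
  proof (induction cs)
    case Nil
    have "A *\<^sub>v 0\<^sub>v n = 0\<^sub>v n" using A by (intro eq_vecI, auto)
    thus ?case using span_zero by simp
  next
    case (Cons p cs)
    obtain d v where p: "p = (d, v)" by (cases p)
    have vG: "v \<in> G" using Cons p by auto
    have v: "v \<in> carrier_vec n" using vG G by auto
    have cs: "set (map snd cs) \<subseteq> G" using Cons by auto
    have f0: "foldr fstep cs (0\<^sub>v n) \<in> carrier_vec n" using foldr_carrier[of cs n] cs G by auto
    have "A *\<^sub>v foldr fstep (p # cs) (0\<^sub>v n) = d \<cdot>\<^sub>v (A *\<^sub>v v) + A *\<^sub>v foldr fstep cs (0\<^sub>v n)"
      using p A v f0 by (simp add: fstep_def mult_add_distrib_mat_vec[of _ n n] mult_mat_vec[of _ n n])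
    thus ?case using span_add[OF G span_smult[OF G gen[OF vG]] Cons(1)[OF cs]] by simp
  qed
qed

lemma eig_inv: fixes A :: "real mat"
  assumes A: "A \<in> carrier_mat n n" and x: "x \<in> eig_real_space P A"
  shows "A *\<^sub>v x \<in> eig_real_space P A"
proof -
  define Ac where "Ac = map_mat complex_of_real A"
  define Gre where "Gre = {map_vec Re v | v l. eigenvector Ac v l \<and> P l}"
  define Gim where "Gim = {map_vec Im v | v l. eigenvector Ac v l \<and> P l}"
  have dimA: "dim_row A = n" using A by simp
  have E: "eig_real_space P A = real_span n (Gre \<union> Gim)"
    unfolding eig_real_space_def Gre_def Gim_def Ac_def dimA ..
  have Acc: "Ac \<in> carrier_mat n n" unfolding Ac_def using A by simp
  have G: "Gre \<union> Gim \<subseteq> carrier_vec n"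
    unfolding Gre_def Gim_def eigenvector_def using Acc by auto
  have key: "A *\<^sub>v map_vec Re v = Re l \<cdot>\<^sub>v map_vec Re v - Im l \<cdot>\<^sub>v map_vec Im v \<and>
             A *\<^sub>v map_vec Im v = Im l \<cdot>\<^sub>v map_vec Re v + Re l \<cdot>\<^sub>v map_vec Im v"
    if ev: "eigenvector Ac v l" for v l
  proof -
    have v: "v \<in> carrier_vec n" and eq: "Ac *\<^sub>v v = l \<cdot>\<^sub>v v" using ev Acc unfolding eigenvector_def by auto
    have comp: "(\<Sum>j<n. complex_of_real (A $$ (i,j)) * v $ j) = l * v $ i" if i: "i < n" for i
    proof -
      have "(Ac *\<^sub>v v) $ i = (l \<cdot>\<^sub>v v) $ i" using eq by simp
      thus ?thesis using i A Acc v unfolding Ac_def by (auto simp: lessThan_atLeast0 scalar_prod_def)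
    qed
    have r: "A *\<^sub>v map_vec Re v = Re l \<cdot>\<^sub>v map_vec Re v - Im l \<cdot>\<^sub>v map_vec Im v"
    proof (rule eq_vecI)
      fix i assume "i < dim_vec (Re l \<cdot>\<^sub>v map_vec Re v - Im l \<cdot>\<^sub>v map_vec Im v)"
      hence i: "i < n" using v by auto
      have "Re (\<Sum>j<n. complex_of_real (A $$ (i,j)) * v $ j) = Re (l * v $ i)" using comp[OF i] by simp
      hence "(\<Sum>j<n. A $$ (i,j) * Re (v $ j)) = Re l * Re (v$i) - Im l * Im (v $ i)"
        by (simp add: Re_sum)
      thus "(A *\<^sub>v map_vec Re v) $ i = (Re l \<cdot>\<^sub>v map_vec Re v - Im l \<cdot>\<^sub>v map_vec Im v) $ i"
        using i A v by (auto simp: lessThan_atLeast0 scalar_prod_def)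
    qed (insert A v, auto)
    have im: "A *\<^sub>v map_vec Im v = Im l \<cdot>\<^sub>v map_vec Re v + Re l \<cdot>\<^sub>v map_vec Im v"
    proof (rule eq_vecI)
      fix i assume "i < dim_vec (Im l \<cdot>\<^sub>v map_vec Re v + Re l \<cdot>\<^sub>v map_vec Im v)"
      hence i: "i < n" using v by auto
      have "Im (\<Sum>j<n. complex_of_real (A $$ (i,j)) * v $ j) = Im (l * v $ i)" using comp[OF i] by simp
      hence "(\<Sum>j<n. A $$ (i,j) * Im (v $ j)) = Re l * Im (v$i) + Im l * Re (v $ i)"
        by (simp add: Im_sum)
      thus "(A *\<^sub>v map_vec Im v) $ i = (Im l \<cdot>\<^sub>v map_vec Re v + Re l \<cdot>\<^sub>v map_vec Im v) $ i"
        using i A v by (auto simp: lessThan_atLeast0 scalar_prod_def algebra_simps)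
    qed (insert A v, auto)
    show ?thesis using r im by simp
  qed
  have gen: "A *\<^sub>v g \<in> real_span n (Gre \<union> Gim)" if g: "g \<in> Gre \<union> Gim" for g
  proof -
    obtain v l where ev: "eigenvector Ac v l" "P l" and gv: "g = map_vec Re v \<or> g = map_vec Im v"
      using g unfolding Gre_def Gim_def by auto
    have inG: "map_vec Re v \<in> Gre \<union> Gim" "map_vec Im v \<in> Gre \<union> Gim"
      using ev unfolding Gre_def Gim_def by auto
    have vc: "map_vec Re v \<in> carrier_vec n" "map_vec Im v \<in> carrier_vec n" using inG G by auto
    have m1: "Re l \<cdot>\<^sub>v map_vec Re v - Im l \<cdot>\<^sub>v map_vec Im v = Re l \<cdot>\<^sub>v map_vec Re v + (- Im l) \<cdot>\<^sub>v map_vec Im v"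
      using vc by (intro eq_vecI, auto)
    from gv show ?thesis
    proof
      assume "g = map_vec Re v"
      thus ?thesis using key[OF ev(1)] span_two[OF G inG, of "Re l" "- Im l"] m1 by simp
    next
      assume "g = map_vec Im v"
      thus ?thesis using key[OF ev(1)] span_two[OF G inG, of "Im l" "Re l"] by simp
    qed
  qed
  show ?thesis using span_linmap[OF G A gen] x unfolding E by blast
qed

theorem mainTheorem5:
  fixes A P1 :: "real mat" and n k :: nat and lam :: "nat \<Rightarrow> complex" and \<xi> :: real
  assumes A: "A \<in> carrier_mat n n"
    and k: "0 < k" "k < n"
    and diag: "similar_mat (map_mat complex_of_real A)
                 (mat n n (\<lambda>(i, j). if i = j then lam i else 0))"
    and lam_dom: "cmod (lam 1) < cmod (lam 0)"
    and lam_ord: "\<forall>i j. i \<le> j \<and> j < n \<longrightarrow> cmod (lam j) \<le> cmod (lam i)"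
    and lam_k: "1 < cmod (lam (k - 1))" "cmod (lam k) < 1"
    and P1: "onb_cols n k P1 (unstable_space A)"
    and xi: "0 < \<xi>" "\<xi> < 1"
    and close: "xi_close n (orth_compl n (unstable_space A)) (stable_space A) \<xi>"
  shows "\<exists>P2 Q2. onb_cols n (n - k) P2 (orth_compl n (unstable_space A)) \<and>
                onb_cols n (n - k) Q2 (stable_space A) \<and>
    (let P = hcat P1 P2; M = transpose_mat P * A * P;
         \<Delta> = mat k (n - k) (\<lambda>(i, j). M $$ (i, j + k)); Q = hcat P1 Q2
     in \<exists>Qi. Qi \<in> carrier_mat n n \<and> Qi * Q = 1\<^sub>m n \<and> Q * Qi = 1\<^sub>m n \<and>
       (let R1 = mat k n (\<lambda>(i, j). Qi $$ (i, j));
            R2 = mat (n - k) n (\<lambda>(i, j). Qi $$ (i + k, j));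
            N2 = R2 * A * Q2
        in sigma_min (transpose_mat P2 * Q2) \<ge> 1 - \<xi> \<and>
           op_norm (transpose_mat P1 * Q2) \<le> sqrt (2 * \<xi>) \<and>
           op_norm (P2 - Q2) \<le> sqrt (2 * \<xi>) \<and>
           op_norm R2 \<le> 1 / (1 - \<xi>) \<and>
           op_norm N2 \<le> 1 / (1 - \<xi>) * op_norm A \<and>
           op_norm (transpose_mat P1 - R1) \<le> sqrt (2 * \<xi>) / (1 - \<xi>) \<and>
           op_norm R1 \<le> 1 + sqrt (2 * \<xi>) / (1 - \<xi>) \<and>
           op_norm \<Delta> \<le> (2 - \<xi>) / (1 - \<xi>) * sqrt (2 * \<xi>) * op_norm A))"
proof -
  let ?U = "unstable_space A"
  let ?V = "stable_space A"
  have P1c: "P1 \<in> carrier_mat n k" and P1o: "transpose_mat P1 * P1 = 1\<^sub>m k"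
    and P1col: "{P1 *\<^sub>v v | v. v \<in> carrier_vec k} = ?U"
    using P1 unfolding onb_cols_def by auto
  obtain d P2 Q where P2: "onb_cols n d P2 (orth_compl n ?U)" and Q: "onb_cols n d Q ?V"
    and sig: "1 - \<xi> < sigma_min (transpose_mat P2 * Q)"
    using close unfolding xi_close_def by auto
  have P2c: "P2 \<in> carrier_mat n d" and P2o: "transpose_mat P2 * P2 = 1\<^sub>m d"
    and P2col: "{P2 *\<^sub>v v | v. v \<in> carrier_vec d} = orth_compl n ?U"
    using P2 unfolding onb_cols_def by auto
  have Qc: "Q \<in> carrier_mat n d" and Qo: "transpose_mat Q * Q = 1\<^sub>m d"
    and Qcol: "{Q *\<^sub>v v | v. v \<in> carrier_vec d} = ?V"
    using Q unfolding onb_cols_def by auto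
  have P1T: "transpose_mat P1 \<in> carrier_mat k n" and P2T: "transpose_mat P2 \<in> carrier_mat d n"
    using P1c P2c by auto
  have inU: "P1 *\<^sub>v w \<in> ?U" if "w \<in> carrier_vec k" for w using P1col that by blast
  have inUp: "P2 *\<^sub>v w \<in> orth_compl n ?U" if "w \<in> carrier_vec d" for w using P2col that by blast
  have P21: "transpose_mat P2 * P1 = 0\<^sub>m d k"
  proof (rule eq_matI)
    fix i j assume "i < dim_row (0\<^sub>m d k :: real mat)" "j < dim_col (0\<^sub>m d k :: real mat)"
    hence i: "i < d" and j: "j < k" by auto
    have "(transpose_mat P2 * P1) $$ (i,j) = col P2 i \<bullet> col P1 j" using i j P2c P1c by simp
    also have "col P2 i = P2 *\<^sub>v unit_vec d i" using mult_unit_col[OF P2c i] by simp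
    also have "col P1 j = P1 *\<^sub>v unit_vec k j" using mult_unit_col[OF P1c j] by simp
    also have "(P2 *\<^sub>v unit_vec d i) \<bullet> (P1 *\<^sub>v unit_vec k j) = 0"
      using inUp[of "unit_vec d i"] inU[of "unit_vec k j"] unfolding orth_compl_def by auto
    finally show "(transpose_mat P2 * P1) $$ (i,j) = 0\<^sub>m d k $$ (i,j)" using i j by simp
  qed (insert P2c P1c, auto)
  have split: "P1 * transpose_mat P1 + P2 * transpose_mat P2 = 1\<^sub>m n"
  proof (rule mat_eq_vec[of _ n n])
    show "P1 * transpose_mat P1 + P2 * transpose_mat P2 \<in> carrier_mat n n" using P1c P2c by auto
    show "1\<^sub>m n \<in> carrier_mat n n" by simp
    fix x :: "real vec" assume x: "x \<in> carrier_vec n"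
    define a where "a = P1 *\<^sub>v (transpose_mat P1 *\<^sub>v x)"
    have ac: "a \<in> carrier_vec n" unfolding a_def using P1c x by simp
    define y where "y = x - a"
    have yc: "y \<in> carrier_vec n" unfolding y_def using x ac by simp
    have P1y: "transpose_mat P1 *\<^sub>v y = 0\<^sub>v k"
    proof -
      have "transpose_mat P1 *\<^sub>v y = transpose_mat P1 *\<^sub>v x - transpose_mat P1 *\<^sub>v a"
        unfolding y_def by (rule mult_minus_distrib_mat_vec[OF P1T x ac])
      also have "transpose_mat P1 *\<^sub>v a = transpose_mat P1 *\<^sub>v x" unfolding a_def
        using P1c P1T x P1o by (simp add: assoc_mult_mat_vec[symmetric, of _ k n _ k])
      finally show ?thesis using P1T x by simp
    qed
    have "y \<in> orth_compl n ?U" unfolding orth_compl_def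
    proof (intro CollectI conjI ballI)
      show "y \<in> carrier_vec n" by (rule yc)
      fix u assume "u \<in> ?U"
      then obtain w where w: "w \<in> carrier_vec k" and u: "u = P1 *\<^sub>v w" using P1col by auto
      have "y \<bullet> u = (transpose_mat P1 *\<^sub>v y) \<bullet> w" unfolding u by (rule sprod_mat[OF P1c yc w])
      thus "y \<bullet> u = 0" unfolding P1y using w by simp
    qed
    then obtain z where z: "z \<in> carrier_vec d" and yz: "y = P2 *\<^sub>v z" using P2col by auto
    have "transpose_mat P2 *\<^sub>v y = z" unfolding yz using P2c P2T z P2o
      by (simp add: assoc_mult_mat_vec[symmetric, of _ d n _ d])
    moreover have "transpose_mat P2 *\<^sub>v y = transpose_mat P2 *\<^sub>v x"
    proof -
      have "transpose_mat P2 *\<^sub>v y = transpose_mat P2 *\<^sub>v x - transpose_mat P2 *\<^sub>v a"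
        unfolding y_def by (rule mult_minus_distrib_mat_vec[OF P2T x ac])
      also have "transpose_mat P2 *\<^sub>v a = (transpose_mat P2 * P1) *\<^sub>v (transpose_mat P1 *\<^sub>v x)"
        unfolding a_def using P2T P1c P1T x by simp
      also have "\<dots> = 0\<^sub>v d" unfolding P21 using P1T x by (intro eq_vecI, auto)
      finally show ?thesis using P2T x by simp
    qed
    ultimately have yP: "y = P2 *\<^sub>v (transpose_mat P2 *\<^sub>v x)" using yz by simp
    have "(P1 * transpose_mat P1 + P2 * transpose_mat P2) *\<^sub>v x = a + y"
      unfolding yP a_def using P1c P2c P1T P2T x by (simp add: add_mult_distrib_mat_vec[of _ n n])
    also have "\<dots> = x" unfolding y_def using ac x by (intro eq_vecI, auto)
    finally show "(P1 * transpose_mat P1 + P2 * transpose_mat P2) *\<^sub>v x = 1\<^sub>m n *\<^sub>v x" using x by simp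
  qed
  define P where "P = hcat P1 P2"
  have Pc: "P \<in> carrier_mat n (k + d)" unfolding P_def by (rule hcat_carrier[OF P1c P2c])
  have PTc: "transpose_mat P \<in> carrier_mat (k + d) n" using Pc by simp
  have colP: "col P j = (if j < k then col P1 j else col P2 (j - k))" if "j < k + d" for j
    unfolding P_def by (rule col_hcat[OF P1c P2c that])
  have PTP: "transpose_mat P * P = 1\<^sub>m (k + d)"
  proof (rule eq_matI)
    fix i j assume "i < dim_row (1\<^sub>m (k + d) :: real mat)" "j < dim_col (1\<^sub>m (k + d) :: real mat)"
    hence i: "i < k + d" and j: "j < k + d" by auto
    have "(transpose_mat P * P) $$ (i,j) = col P i \<bullet> col P j" using Pc i j by simp
    also have "\<dots> = 1\<^sub>m (k + d) $$ (i,j)"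
    proof (cases "i < k"; cases "j < k")
      assume "i < k" "j < k"
      hence "col P1 i \<bullet> col P1 j = (transpose_mat P1 * P1) $$ (i,j)" using P1c by simp
      thus ?thesis using colP[OF i] colP[OF j] \<open>i < k\<close> \<open>j < k\<close> unfolding P1o by simp
    next
      assume "i < k" "\<not> j < k"
      hence "col P2 (j - k) \<bullet> col P1 i = (transpose_mat P2 * P1) $$ (j - k, i)" using P1c P2c j by simp
      moreover have "col P1 i \<bullet> col P2 (j - k) = col P2 (j - k) \<bullet> col P1 i"
        by (rule comm_scalar_prod[of _ n], insert P1c P2c, auto)
      ultimately show ?thesis using colP[OF i] colP[OF j] \<open>i < k\<close> \<open>\<not> j < k\<close> i j unfolding P21 by simp
    next
      assume "\<not> i < k" "j < k"
      hence "col P2 (i - k) \<bullet> col P1 j = (transpose_mat P2 * P1) $$ (i - k, j)" using P1c P2c i by simp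
      thus ?thesis using colP[OF i] colP[OF j] \<open>\<not> i < k\<close> \<open>j < k\<close> i j unfolding P21 by simp
    next
      assume "\<not> i < k" "\<not> j < k"
      hence "col P2 (i - k) \<bullet> col P2 (j - k) = (transpose_mat P2 * P2) $$ (i - k, j - k)" using P2c i j by simp
      thus ?thesis using colP[OF i] colP[OF j] \<open>\<not> i < k\<close> \<open>\<not> j < k\<close> i j unfolding P2o by auto
    qed
    finally show "(transpose_mat P * P) $$ (i,j) = 1\<^sub>m (k + d) $$ (i,j)" .
  qed (insert PTc Pc, auto)
  have PPT: "P * transpose_mat P = 1\<^sub>m n"
  proof (rule eq_matI)
    fix i j assume "i < dim_row (1\<^sub>m n :: real mat)" "j < dim_col (1\<^sub>m n :: real mat)"
    hence i: "i < n" and j: "j < n" by auto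
    have "(P * transpose_mat P) $$ (i,j) = row P i \<bullet> row P j" using Pc i j by simp
    also have "\<dots> = row P1 i \<bullet> row P1 j + row P2 i \<bullet> row P2 j"
      unfolding P_def by (rule row_sprod_hcat[OF P1c P2c P1c P2c i j])
    also have "\<dots> = (P1 * transpose_mat P1 + P2 * transpose_mat P2) $$ (i,j)"
      using P1c P2c i j by simp
    finally show "(P * transpose_mat P) $$ (i,j) = 1\<^sub>m n $$ (i,j)" unfolding split .
  qed (insert PTc Pc, auto)
  have "k + d \<le> n" by (rule pad_le[OF PTc Pc PTP])
  moreover have "n \<le> k + d" by (rule pad_le[OF Pc PTc PPT])
  ultimately have dnk: "d = n - k" by simp
  have nkm: "n = k + (n - k)" using k by simp
  have m0: "0 < n - k" using k by simp
  have inv: "\<exists>y \<in> carrier_vec (n - k). A *\<^sub>v (Q *\<^sub>v x) = Q *\<^sub>v y" if x: "x \<in> carrier_vec (n - k)" for x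
  proof -
    have "Q *\<^sub>v x \<in> ?V" using Qcol x dnk by blast
    hence "A *\<^sub>v (Q *\<^sub>v x) \<in> ?V" unfolding stable_space_def by (rule eig_inv[OF A])
    thus ?thesis using Qcol dnk by blast
  qed
  note C = core[OF A P1c P1o P2c[unfolded dnk] P2o[unfolded dnk] Qc[unfolded dnk] Qo[unfolded dnk]
      P21[unfolded dnk] split nkm sig xi m0 inv]
  then obtain Q2 where Q2c: "Q2 \<in> carrier_mat n (n - k)" and Q2o: "transpose_mat Q2 * Q2 = 1\<^sub>m (n - k)"
    and Q2col: "{Q2 *\<^sub>v v | v. v \<in> carrier_vec (n - k)} = {Q *\<^sub>v v | v. v \<in> carrier_vec (n - k)}"
    and rest: "let P = hcat P1 P2; M = transpose_mat P * A * P;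
         \<Delta> = mat k (n - k) (\<lambda>(i, j). M $$ (i, j + k)); Q = hcat P1 Q2
     in \<exists>Qi. Qi \<in> carrier_mat n n \<and> Qi * Q = 1\<^sub>m n \<and> Q * Qi = 1\<^sub>m n \<and>
       (let R1 = mat k n (\<lambda>(i, j). Qi $$ (i, j));
            R2 = mat (n - k) n (\<lambda>(i, j). Qi $$ (i + k, j));
            N2 = R2 * A * Q2
        in sigma_min (transpose_mat P2 * Q2) \<ge> 1 - \<xi> \<and>
           op_norm (transpose_mat P1 * Q2) \<le> sqrt (2 * \<xi>) \<and>
           op_norm (P2 - Q2) \<le> sqrt (2 * \<xi>) \<and>
           op_norm R2 \<le> 1 / (1 - \<xi>) \<and>
           op_norm N2 \<le> 1 / (1 - \<xi>) * op_norm A \<and>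
           op_norm (transpose_mat P1 - R1) \<le> sqrt (2 * \<xi>) / (1 - \<xi>) \<and>
           op_norm R1 \<le> 1 + sqrt (2 * \<xi>) / (1 - \<xi>) \<and>
           op_norm \<Delta> \<le> (2 - \<xi>) / (1 - \<xi>) * sqrt (2 * \<xi>) * op_norm A)"
    by blast
  have onbP2: "onb_cols n (n - k) P2 (orth_compl n ?U)" using P2 dnk by simp
  have onbQ2: "onb_cols n (n - k) Q2 ?V" unfolding onb_cols_def using Q2c Q2o Q2col Qcol dnk by simp
  show ?thesis using onbP2 onbQ2 rest by blast
qed

end
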